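(* Let $\beta\in\mathbb{N}=\{0,1,2,\dots\}$ and $\alpha\in\mathbb{D}\setminus\{0\}$. Let $\phi_\alpha(z)=\dfrac{\alpha-z}{1-\overline{\alpha}z}$, let $\lambda\in\mathbb{T}$, and suppose $\phi=\phi_\alpha\circ(\lambda\phi_\alpha)$ is an elliptic automorphism of finite order $N$, i.e. $N$ is the smallest positive integer with $\lambda^N=1$. For $n=0,1,\dots,N-1$ let $V_n=\ker(C_\phi^*-\overline{\lambda}^nI)$, where $C_\phi f=f\circ\phi$ acts on $A^2_\beta$ and $C_\phi^*$ is its adjoint. If $N\ge 2(3+\beta)$, then $V_0\perp V_{3+\beta}$.
   Context: $\mathbb{D}$ is the open unit disc and $\mathbb{T}$ the unit circle. For $\beta>-1$, $A^2_\beta$ is the Hilbert space of analytic functions $f(z)=\sum_{n\ge0}\widehat f(n)z^n$ on $\mathbb{D}$ with inner product $\langle f,g\rangle=\sum_{n\ge0}\frac{n!\,\Gamma(2+\beta)}{\Gamma(n+2+\beta)}\widehat f(n)\overline{\widehat g(n)}$ (equivalently the $L^2$ inner product with respect to $(\beta+1)(1-|z|^2)^\beta dA(z)$). *)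

theory Defs
  imports "HOL-Analysis.Analysis"
begin

definition taylor_coeff :: "(complex \<Rightarrow> complex) \<Rightarrow> nat \<Rightarrow> complex" where
  "taylor_coeff f n = (deriv ^^ n) f 0 / fact n"

definition bergman_weight :: "real \<Rightarrow> nat \<Rightarrow> real" where
  "bergman_weight \<beta> n = fact n * Gamma (2 + \<beta>) / Gamma (real n + 2 + \<beta>)"

definition A2 :: "real \<Rightarrow> (complex \<Rightarrow> complex) set" where
  "A2 \<beta> = {f. f holomorphic_on ball 0 1 \<and>
     summable (\<lambda>n. bergman_weight \<beta> n * (cmod (taylor_coeff f n))^2)}"

definition A2_inner :: "real \<Rightarrow> (complex \<Rightarrow> complex) \<Rightarrow> (complex \<Rightarrow> complex) \<Rightarrow> complex" where
  "A2_inner \<beta> f g = (\<Sum>n. complex_of_real (bergman_weight \<beta> n) * taylor_coeff f n * cnj (taylor_coeff g n))"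

definition mobius_phi :: "complex \<Rightarrow> complex \<Rightarrow> complex" where
  "mobius_phi \<alpha> z = (\<alpha> - z) / (1 - cnj \<alpha> * z)"

definition comp_op :: "(complex \<Rightarrow> complex) \<Rightarrow> (complex \<Rightarrow> complex) \<Rightarrow> (complex \<Rightarrow> complex)" where
  "comp_op \<phi> f = f \<circ> \<phi>"

text \<open>ker(C_phi^* - mu I) on A^2_beta: those g with C_phi^* g = mu g, i.e.
  <C_phi f, g> = <f, mu g> for all f in A^2_beta (definition of the adjoint).\<close>
definition adj_eigenspace :: "real \<Rightarrow> (complex \<Rightarrow> complex) \<Rightarrow> complex \<Rightarrow> (complex \<Rightarrow> complex) set" where
  "adj_eigenspace \<beta> \<phi> \<mu> = {g \<in> A2 \<beta>. \<forall>f \<in> A2 \<beta>.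
      A2_inner \<beta> (comp_op \<phi> f) g = A2_inner \<beta> f (\<lambda>z. \<mu> * g z)}"

end

theory Submission
  imports Defs "HOL-Complex_Analysis.Complex_Analysis"
begin


section \<open>Double series swap\<close>

lemma dswap:
  fixes f :: "nat \<Rightarrow> nat \<Rightarrow> complex"
  assumes r: "\<And>i. summable (\<lambda>j. norm (f i j))"
    and s: "summable (\<lambda>i. \<Sum>j. norm (f i j))"
  shows "(\<lambda>j. \<Sum>i. f i j) sums (\<Sum>i. \<Sum>j. f i j)"
    and "\<And>j. summable (\<lambda>i. f i j)"
proof -
  have sig: "Infinite_Set_Sum.abs_summable_on (\<lambda>(i,j). f i j) (UNIV \<times> UNIV)"
  proof -
    have "Infinite_Set_Sum.abs_summable_on (\<lambda>p. (\<lambda>(i,j). f i j) p) (Sigma UNIV (\<lambda>_. UNIV))"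
    proof (subst abs_summable_on_Sigma_iff, simp, simp, intro conjI ballI)
      fix i :: nat
      show "Infinite_Set_Sum.abs_summable_on (\<lambda>y. case (i, y) of (i, j) \<Rightarrow> f i j) UNIV"
        using r[of i] by (simp add: abs_summable_on_nat_iff')
    next
      have eq: "\<And>i. infsetsum (\<lambda>y. norm (case (i, y) of (i, j) \<Rightarrow> f i j)) UNIV = (\<Sum>j. norm (f i j))"
        using r by (simp add: infsetsum_nat' abs_summable_on_nat_iff')
      show "Infinite_Set_Sum.abs_summable_on (\<lambda>x. infsetsum (\<lambda>y. norm (case (x, y) of (i, j) \<Rightarrow> f i j)) UNIV) UNIV"
      proof -
        have "(\<lambda>n. \<bar>\<Sum>j. cmod (f n j)\<bar>) = (\<lambda>n. \<Sum>j. cmod (f n j))"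
          using r by (intro ext abs_of_nonneg suminf_nonneg) auto
        then show ?thesis unfolding eq using s by (simp add: abs_summable_on_nat_iff')
      qed
    qed
    then show ?thesis by simp
  qed
  have col: "Infinite_Set_Sum.abs_summable_on (\<lambda>i. f i j) UNIV" for j
  proof -
    have "Infinite_Set_Sum.abs_summable_on (\<lambda>(j,i). f i j) (UNIV \<times> UNIV)"
      using sig by (subst (asm) abs_summable_on_Times_swap) (simp add: case_prod_unfold)
    then have "Infinite_Set_Sum.abs_summable_on (\<lambda>p. (\<lambda>(j,i). f i j) p) (Sigma UNIV (\<lambda>_. UNIV))" by simp
    then show ?thesis
      by (subst (asm) abs_summable_on_Sigma_iff) auto
  qed
  then show "\<And>j. summable (\<lambda>i. f i j)"
    by (simp add: abs_summable_on_nat_iff' summable_norm_cancel)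
  have row: "Infinite_Set_Sum.abs_summable_on (\<lambda>j. f i j) UNIV" for i
    using r[of i] by (simp add: abs_summable_on_nat_iff')
  have sw: "infsetsum (\<lambda>i. infsetsum (\<lambda>j. f i j) UNIV) UNIV = infsetsum (\<lambda>j. infsetsum (\<lambda>i. f i j) UNIV) UNIV"
    by (rule infsetsum_swap) (use sig in auto)
  have p1: "Infinite_Set_Sum.abs_summable_on (\<lambda>i. infsetsum (\<lambda>j. f i j) UNIV) UNIV"
    using abs_summable_on_Sigma_project1'[of "\<lambda>i j. f i j" UNIV "\<lambda>_. UNIV"] sig by simp
  have p2: "Infinite_Set_Sum.abs_summable_on (\<lambda>j. infsetsum (\<lambda>i. f i j) UNIV) UNIV"
  proof -
    have "Infinite_Set_Sum.abs_summable_on (\<lambda>(j,i). f i j) (UNIV \<times> UNIV)"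
      using sig by (subst (asm) abs_summable_on_Times_swap) (simp add: case_prod_unfold)
    then show ?thesis
      using abs_summable_on_Sigma_project1'[of "\<lambda>j i. f i j" UNIV "\<lambda>_. UNIV"] by simp
  qed
  have e1: "infsetsum (\<lambda>j. f i j) UNIV = (\<Sum>j. f i j)" for i using row[of i] by (rule infsetsum_nat')
  have e2: "infsetsum (\<lambda>i. f i j) UNIV = (\<Sum>i. f i j)" for j using col[of j] by (rule infsetsum_nat')
  have "(\<lambda>j. infsetsum (\<lambda>i. f i j) UNIV) sums infsetsum (\<lambda>j. infsetsum (\<lambda>i. f i j) UNIV) UNIV"
    using p2 by (rule sums_infsetsum_nat')
  moreover have "infsetsum (\<lambda>i. infsetsum (\<lambda>j. f i j) UNIV) UNIV = (\<Sum>i. \<Sum>j. f i j)"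
    using infsetsum_nat'[OF p1] by (simp add: e1)
  ultimately show "(\<lambda>j. \<Sum>i. f i j) sums (\<Sum>i. \<Sum>j. f i j)"
    using sw by (simp add: e2)
qed

section \<open>Taylor coefficients\<close>

lemma tc_sums:
  assumes "f holomorphic_on ball 0 r" "z \<in> ball 0 r"
  shows "(\<lambda>n. taylor_coeff f n * z ^ n) sums f z"
  using holomorphic_power_series[OF assms] by (simp add: taylor_coeff_def)

lemma tc_unique:
  assumes r: "r > 0" and s: "\<And>z. z \<in> ball 0 r \<Longrightarrow> (\<lambda>n. c n * z ^ n) sums f z"
  shows "taylor_coeff f n = c n"
proof -
  have rad: "fps_conv_radius (Abs_fps c) \<ge> ereal r"
    unfolding fps_conv_radius_def
  proof (rule conv_radius_geI_ex)
    fix t :: real assume "0 < t" "ereal t < ereal r"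
    then show "\<exists>z. norm z = t \<and> summable (\<lambda>n. fps_nth (Abs_fps c) n * z ^ n)"
      using s[of "of_real t"] by (intro exI[of _ "complex_of_real t"]) (auto simp: sums_iff)
  qed
  have "f has_fps_expansion Abs_fps c"
    unfolding has_fps_expansion_def
  proof
    show "0 < fps_conv_radius (Abs_fps c)" using rad r
      by (meson ereal_less(2) less_le_trans zero_ereal_def)
    have "eventually (\<lambda>z. z \<in> ball 0 r) (nhds (0::complex))"
      using r by (intro eventually_nhds_in_open) auto
    then show "\<forall>\<^sub>F z in nhds 0. eval_fps (Abs_fps c) z = f z"
      by eventually_elim (use s in \<open>auto simp: eval_fps_def sums_iff\<close>)
  qed
  from fps_nth_fps_expansion[OF this, of n] show ?thesis
    by (simp add: taylor_coeff_def)
qed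

lemma tc_cong:
  assumes "r > 0" "\<And>z. z \<in> ball 0 r \<Longrightarrow> f z = g z"
  shows "taylor_coeff f n = taylor_coeff g n"
proof -
  have "eventually (\<lambda>z. z \<in> ball 0 r) (nhds (0::complex))"
    using assms by (intro eventually_nhds_in_open) auto
  then have "eventually (\<lambda>z. f z = g z) (nhds 0)"
    by eventually_elim (use assms in auto)
  then show ?thesis unfolding taylor_coeff_def
    by (subst higher_deriv_cong_ev[of f g 0 0 n]) auto
qed

lemma tc_mult:
  assumes "f holomorphic_on ball 0 r" "g holomorphic_on ball 0 r" "r > 0"
  shows "taylor_coeff (\<lambda>z. f z * g z) n = (\<Sum>i=0..n. taylor_coeff f i * taylor_coeff g (n - i))"
proof -
  have "(deriv ^^ n) (\<lambda>w. f w * g w) 0 =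
         (\<Sum>i = 0..n. of_nat (n choose i) * (deriv ^^ i) f 0 * (deriv ^^ (n-i)) g 0)"
    by (rule higher_deriv_mult) (use assms in auto)
  then have "taylor_coeff (\<lambda>z. f z * g z) n =
     (\<Sum>i = 0..n. of_nat (n choose i) * (deriv ^^ i) f 0 * (deriv ^^ (n-i)) g 0) / fact n"
    by (simp add: taylor_coeff_def)
  also have "\<dots> = (\<Sum>i=0..n. taylor_coeff f i * taylor_coeff g (n - i))"
    unfolding sum_divide_distrib taylor_coeff_def
  proof (rule sum.cong, simp)
    fix i assume "i \<in> {0..n}"
    then have i: "i \<le> n" by simp
    have "of_nat (n choose i) = (fact n / (fact i * fact (n - i)) :: complex)"
      using binomial_fact[OF i] by simp
    then show "of_nat (n choose i) * (deriv ^^ i) f 0 * (deriv ^^ (n - i)) g 0 / fact n =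
         (deriv ^^ i) f 0 / fact i * ((deriv ^^ (n - i)) g 0 / fact (n - i))"
      by (simp add: field_simps)
  qed
  finally show ?thesis .
qed

lemma tc_cmult:
  assumes "f holomorphic_on ball 0 r" "r > 0"
  shows "taylor_coeff (\<lambda>z. c * f z) n = c * taylor_coeff f n"
  using higher_deriv_cmult[of f "ball 0 r" 0 n c] assms by (simp add: taylor_coeff_def)

lemma tc_poly:
  fixes c :: "nat \<Rightarrow> complex"
  shows "taylor_coeff (\<lambda>z. \<Sum>i\<le>d. c i * z ^ i) n = (if n \<le> d then c n else 0)"
proof (rule tc_unique[of 1])
  fix z :: complex
  show "(\<lambda>n. (if n \<le> d then c n else 0) * z ^ n) sums (\<Sum>i\<le>d. c i * z ^ i)"
  proof -
    have "(\<lambda>n. (if n \<le> d then c n else 0) * z ^ n) = (\<lambda>r. if r \<in> {..d} then c r * z ^ r else 0)"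
      by auto
    then show ?thesis using sums_If_finite_set[of "{..d}" "\<lambda>n. c n * z ^ n"] by simp
  qed
qed simp

lemma tc_monom: "taylor_coeff (\<lambda>z. z ^ k) n = (if n = k then 1 else 0)"
proof (rule tc_unique[of 1])
  fix z :: complex
  show "(\<lambda>n. (if n = k then 1 else 0) * z ^ n) sums (z ^ k)"
  proof -
    have "(\<lambda>n. (if n = k then 1 else 0) * z ^ n) = (\<lambda>r. if r = k then z ^ r else 0)"
      by auto
    then show ?thesis using sums_single[of k "\<lambda>n. z ^ n"] by simp
  qed
qed simp


locale bw = fixes b :: nat
begin

definition w :: "nat \<Rightarrow> real" where "w n = bergman_weight (real b) n"
definition L2 :: "(nat \<Rightarrow> complex) \<Rightarrow> bool" where
  "L2 x \<longleftrightarrow> summable (\<lambda>n. w n * (cmod (x n))^2)"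
definition ip :: "(nat \<Rightarrow> complex) \<Rightarrow> (nat \<Rightarrow> complex) \<Rightarrow> complex" where
  "ip x y = (\<Sum>n. complex_of_real (w n) * x n * cnj (y n))"
definition nrm :: "(nat \<Rightarrow> complex) \<Rightarrow> real" where
  "nrm x = (\<Sum>n. w n * (cmod (x n))^2)"

lemma w_eq: "w n = fact n / pochhammer (real b + 2) n"
proof -
  have g1: "Gamma (2 + real b) = fact (b + 1)"
    using Gamma_fact[of "b+1", where 'a=real] by (simp add: add.commute)
  have g2: "Gamma (real n + 2 + real b) = fact (n + b + 1)"
    using Gamma_fact[of "n+b+1", where 'a=real] by (simp add: algebra_simps)
  have "(fact (n + b + 1) :: real) = pochhammer 1 (b + 1 + n)"
    by (simp add: pochhammer_fact add_ac)
  also have "\<dots> = pochhammer 1 (b+1) * pochhammer (1 + of_nat (b+1)) n"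
    by (rule pochhammer_product')
  also have "\<dots> = fact (b+1) * pochhammer (real b + 2) n"
    by (simp add: pochhammer_fact add_ac)
  finally have "(fact (n + b + 1) :: real) = fact (b+1) * pochhammer (real b + 2) n" .
  then show ?thesis
    unfolding w_def bergman_weight_def g1 g2 by simp
qed

lemma poch_pos: "pochhammer (real b + 2) n > 0"
  by (rule pochhammer_pos) auto

lemma w_pos: "w n > 0"
  unfolding w_eq using poch_pos by simp

lemma w_Suc: "w (Suc n) = w n * (real n + 1) / (real b + 2 + real n)"
  unfolding w_eq by (simp add: pochhammer_Suc field_simps)

lemma w_Suc_le: "w (Suc n) \<le> w n"
proof -
  have "(real n + 1) / (real b + 2 + real n) \<le> 1" by simp
  then have "w n * ((real n + 1) / (real b + 2 + real n)) \<le> w n * 1"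
    using w_pos[of n] by (intro mult_left_mono) auto
  then show ?thesis unfolding w_Suc by simp
qed

lemma w_mono: "m \<le> n \<Longrightarrow> w n \<le> w m"
proof (induction n)
  case 0 then show ?case by simp
next
  case (Suc n)
  then show ?case
    by (metis le_Suc_eq order_refl order_trans w_Suc_le)
qed

lemma w_0: "w 0 = 1" unfolding w_eq by simp

lemma w_le1: "w n \<le> 1" using w_mono[of 0 n] w_0 by simp

lemma inv_w: "1 / w n = pochhammer (real b + 2) n / fact n"
  unfolding w_eq by simp

subsection \<open>The sequence space\<close>

lemma summable_le_real:
  fixes f g :: "nat \<Rightarrow> real"
  assumes "\<And>n. 0 \<le> f n" "\<And>n. f n \<le> g n" "summable g"
  shows "summable f"
  by (rule summable_comparison_test'[OF assms(3), of 0]) (use assms in auto)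

lemma suminf_cnj: "summable f \<Longrightarrow> (\<Sum>n. cnj (f n)) = cnj (suminf f)"
  by (metis sums_cnj summable_sums sums_unique)

lemma L2_0[simp]: "L2 (\<lambda>n. 0)" by (simp add: L2_def)

lemma sq_ineq: "2 * (a::real) * c \<le> a^2 + c^2"
  using sum_squares_bound[of a c] by simp

lemma sq_ineq2: "(a::real) * c \<le> (a^2 + c^2) / 2"
  using sum_squares_bound[of a c] by (simp add: mult.assoc)

lemma L2_add:
  assumes "L2 x" "L2 y" shows "L2 (\<lambda>n. x n + y n)"
proof -
  have "w n * (cmod (x n + y n))^2 \<le> 2 * (w n * (cmod (x n))^2) + 2 * (w n * (cmod (y n))^2)" for n
  proof -
    have h1: "(cmod (x n + y n))^2 \<le> (cmod (x n) + cmod (y n))^2"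
      by (intro power_mono norm_triangle_ineq) simp
    have h2: "(cmod (x n) + cmod (y n))^2 = (cmod (x n))^2 + (cmod (y n))^2 + 2 * cmod (x n) * cmod (y n)"
      by (simp add: power2_sum)
    have h3: "2 * cmod (x n) * cmod (y n) \<le> (cmod (x n))^2 + (cmod (y n))^2"
      by (rule sq_ineq)
    have "(cmod (x n + y n))^2 \<le> 2 * (cmod (x n))^2 + 2 * (cmod (y n))^2"
      using h1 h2 h3 by linarith
    then have "w n * (cmod (x n + y n))^2 \<le> w n * (2 * (cmod (x n))^2 + 2 * (cmod (y n))^2)"
      using w_pos[of n] by (intro mult_left_mono) auto
    then show ?thesis by (simp add: distrib_left mult.left_commute)
  qed
  moreover have "summable (\<lambda>n. 2 * (w n * (cmod (x n))^2) + 2 * (w n * (cmod (y n))^2))"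
    using assms unfolding L2_def by (intro summable_add summable_mult)
  moreover have "0 \<le> w n * (cmod (x n + y n))^2" for n
    using w_pos[of n] by simp
  ultimately show ?thesis unfolding L2_def
    using summable_le_real[of "\<lambda>n. w n * (cmod (x n + y n))^2" "\<lambda>n. 2 * (w n * (cmod (x n))^2) + 2 * (w n * (cmod (y n))^2)"]
    by blast
qed

lemma L2_cmult: assumes "L2 x" shows "L2 (\<lambda>n. c * x n)"
proof -
  have "(\<lambda>n. w n * (cmod (c * x n))^2) = (\<lambda>n. (cmod c)^2 * (w n * (cmod (x n))^2))"
    by (simp add: norm_mult power_mult_distrib mult.left_commute)
  moreover have "summable (\<lambda>n. (cmod c)^2 * (w n * (cmod (x n))^2))"
    using assms unfolding L2_def by (rule summable_mult)
  ultimately show ?thesis unfolding L2_def by simp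
qed

lemma L2_uminus: assumes "L2 x" shows "L2 (\<lambda>n. - x n)"
  using L2_cmult[OF assms, of "-1"] by simp

lemma L2_diff: assumes "L2 x" "L2 y" shows "L2 (\<lambda>n. x n - y n)"
  using L2_add[OF assms(1) L2_uminus[OF assms(2)]] by simp

lemma L2_sum: assumes "\<And>i. i \<in> I \<Longrightarrow> L2 (X i)" shows "L2 (\<lambda>n. \<Sum>i\<in>I. X i n)"
  using assms
proof (induction I rule: infinite_finite_induct)
  case (insert i I)
  then show ?case using L2_add[of "X i" "\<lambda>n. \<Sum>i\<in>I. X i n"] by simp
qed simp_all

lemma L2_cong: "L2 x \<Longrightarrow> (\<And>n. y n = x n) \<Longrightarrow> L2 y"
  by (metis ext)

lemma L2_finite_supp: assumes "\<And>n. n \<ge> N \<Longrightarrow> x n = 0" shows "L2 x"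
  unfolding L2_def
  by (rule summable_finite[of "{..<N}"]) (use assms in auto)

definition dl :: "nat \<Rightarrow> nat \<Rightarrow> complex" where "dl k = (\<lambda>n. if n = k then 1 else 0)"

lemma L2_dl: "L2 (dl k)"
  by (rule L2_finite_supp[of "Suc k"]) (simp add: dl_def)

definition tr :: "nat \<Rightarrow> (nat \<Rightarrow> complex) \<Rightarrow> nat \<Rightarrow> complex"
  where "tr N x = (\<lambda>n. if n < N then x n else 0)"

lemma L2_tr: "L2 (tr N x)"
  by (rule L2_finite_supp[of N]) (simp add: tr_def)

lemma ip_norm_summable:
  assumes "L2 x" "L2 y"
  shows "summable (\<lambda>n. norm (complex_of_real (w n) * x n * cnj (y n)))"
proof (rule summable_le_real)
  fix n
  show "0 \<le> norm (complex_of_real (w n) * x n * cnj (y n))" by (rule norm_ge_zero)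
  have e: "norm (complex_of_real (w n) * x n * cnj (y n)) = w n * (cmod (x n) * cmod (y n))"
    using w_pos[of n] by (simp add: norm_mult)
  have "w n * (cmod (x n) * cmod (y n)) \<le> w n * (((cmod (x n))^2 + (cmod (y n))^2) / 2)"
  proof (rule mult_left_mono)
    show "cmod (x n) * cmod (y n) \<le> ((cmod (x n))^2 + (cmod (y n))^2) / 2"
      by (rule sq_ineq2)
    show "0 \<le> w n" using w_pos[of n] by linarith
  qed
  then show "norm (complex_of_real (w n) * x n * cnj (y n)) \<le> (w n * (cmod (x n))^2 + w n * (cmod (y n))^2) / 2"
    unfolding e by (simp add: distrib_left)
next
  show "summable (\<lambda>n. (w n * (cmod (x n))^2 + w n * (cmod (y n))^2) / 2)"
    using assms unfolding L2_def by (intro summable_divide summable_add)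
qed

lemma ip_summable:
  assumes "L2 x" "L2 y"
  shows "summable (\<lambda>n. complex_of_real (w n) * x n * cnj (y n))"
  using ip_norm_summable[OF assms] by (rule summable_norm_cancel)

lemma ip_sums:
  assumes "L2 x" "L2 y"
  shows "(\<lambda>n. complex_of_real (w n) * x n * cnj (y n)) sums ip x y"
  using ip_summable[OF assms] unfolding ip_def by (simp add: summable_sums)

lemma ip_add_left:
  assumes "L2 x" "L2 y" "L2 z"
  shows "ip (\<lambda>n. x n + y n) z = ip x z + ip y z"
  unfolding ip_def
  using suminf_add[OF ip_summable[OF assms(1,3)] ip_summable[OF assms(2,3)]]
  by (simp add: algebra_simps)

lemma ip_cmult_left:
  assumes "L2 x" "L2 z"
  shows "ip (\<lambda>n. c * x n) z = c * ip x z"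
  unfolding ip_def
  using suminf_mult[OF ip_summable[OF assms], of c]
  by (simp add: algebra_simps)

lemma ip_conj: assumes "L2 x" "L2 y" shows "ip y x = cnj (ip x y)"
proof -
  have "cnj (ip x y) = (\<Sum>n. cnj (complex_of_real (w n) * x n * cnj (y n)))"
    unfolding ip_def by (rule suminf_cnj[symmetric, OF ip_summable[OF assms]])
  also have "\<dots> = ip y x" unfolding ip_def by (simp add: mult_ac)
  finally show ?thesis by simp
qed

lemma ip_add_right:
  assumes "L2 x" "L2 y" "L2 z"
  shows "ip z (\<lambda>n. x n + y n) = ip z x + ip z y"
proof -
  have "cnj (ip z (\<lambda>n. x n + y n)) = cnj (ip z x + ip z y)"
    using ip_add_left[OF assms] assms L2_add[OF assms(1,2)] by (simp add: ip_conj[of z])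
  then show ?thesis by (metis complex_cnj_cnj)
qed

lemma ip_cmult_right:
  assumes "L2 x" "L2 z"
  shows "ip z (\<lambda>n. c * x n) = cnj c * ip z x"
proof -
  have "cnj (ip z (\<lambda>n. c * x n)) = cnj (cnj c * ip z x)"
    using ip_cmult_left[OF assms, of c] assms L2_cmult[OF assms(1)] by (simp add: ip_conj[of z])
  then show ?thesis by (metis complex_cnj_cnj)
qed

lemma ip_sum_left:
  assumes "\<And>i. i \<in> I \<Longrightarrow> L2 (X i)" "L2 z"
  shows "ip (\<lambda>n. \<Sum>i\<in>I. X i n) z = (\<Sum>i\<in>I. ip (X i) z)"
  using assms
proof (induction I rule: infinite_finite_induct)
  case (infinite A) then show ?case by (simp add: ip_def)
next
  case empty then show ?case by (simp add: ip_def)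
next
  case (insert i I)
  have "ip (\<lambda>n. \<Sum>i\<in>insert i I. X i n) z = ip (\<lambda>n. X i n + (\<Sum>i\<in>I. X i n)) z"
    using insert by simp
  also have "\<dots> = ip (X i) z + ip (\<lambda>n. \<Sum>i\<in>I. X i n) z"
    using insert by (intro ip_add_left L2_sum) auto
  finally show ?case using insert by simp
qed

lemma ip_cong: "(\<And>n. x n = x' n) \<Longrightarrow> (\<And>n. y n = y' n) \<Longrightarrow> ip x y = ip x' y'"
  by (metis ext)

lemma nrm_nonneg: "L2 x \<Longrightarrow> nrm x \<ge> 0"
  unfolding nrm_def L2_def
proof (rule suminf_nonneg)
  fix n show "0 \<le> w n * (cmod (x n))^2" using w_pos[of n] by simp
qed

lemma ip_self: assumes "L2 x" shows "ip x x = complex_of_real (nrm x)"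
proof -
  have "(\<lambda>n. complex_of_real (w n) * x n * cnj (x n)) = (\<lambda>n. complex_of_real (w n * (cmod (x n))^2))"
    by (simp add: complex_norm_square mult.assoc del: of_real_power)
  moreover have "(\<Sum>n. complex_of_real (w n * (cmod (x n))^2)) = complex_of_real (\<Sum>n. w n * (cmod (x n))^2)"
    using assms unfolding L2_def by (rule suminf_of_real[symmetric])
  ultimately show ?thesis unfolding ip_def nrm_def by simp
qed

lemma nrm_sums: "L2 x \<Longrightarrow> (\<lambda>n. w n * (cmod (x n))^2) sums nrm x"
  unfolding L2_def nrm_def by (simp add: summable_sums)

lemma polar_id:
  fixes p q :: complex
  shows "(p + q) * cnj (p + q) - (p - q) * cnj (p - q) + \<i> * ((p + \<i> * q) * cnj (p + \<i> * q))
     - \<i> * ((p - \<i> * q) * cnj (p - \<i> * q)) = 4 * (p * cnj q)"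
proof -
  have "(p + q) * cnj (p + q) - (p - q) * cnj (p - q) + \<i> * ((p + \<i> * q) * cnj (p + \<i> * q))
     - \<i> * ((p - \<i> * q) * cnj (p - \<i> * q)) =
     (p + q) * (cnj p + cnj q) - (p - q) * (cnj p - cnj q) + \<i> * ((p + \<i> * q) * (cnj p - \<i> * cnj q))
     - \<i> * ((p - \<i> * q) * (cnj p + \<i> * cnj q))"
    by (simp only: complex_cnj_add complex_cnj_diff complex_cnj_mult complex_cnj_i) simp
  also have "\<dots> = 4 * (p * cnj q)"
  proof -
    have i2: "\<i> * \<i> = (-1::complex)" by simp
    then show ?thesis by algebra
  qed
  finally show ?thesis .
qed

lemma polarization:
  assumes "L2 x" "L2 y"
  shows "ip x y = (complex_of_real (nrm (\<lambda>n. x n + y n)) - complex_of_real (nrm (\<lambda>n. x n - y n))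
     + \<i> * complex_of_real (nrm (\<lambda>n. x n + \<i> * y n)) - \<i> * complex_of_real (nrm (\<lambda>n. x n - \<i> * y n))) / 4"
proof -
  have Lp: "L2 (\<lambda>n. x n + y n)" "L2 (\<lambda>n. x n - y n)" "L2 (\<lambda>n. x n + \<i> * y n)" "L2 (\<lambda>n. x n - \<i> * y n)"
    using assms by (auto intro: L2_add L2_diff L2_cmult)
  have "ip (\<lambda>n. x n + y n) (\<lambda>n. x n + y n) - ip (\<lambda>n. x n - y n) (\<lambda>n. x n - y n)
     + \<i> * ip (\<lambda>n. x n + \<i> * y n) (\<lambda>n. x n + \<i> * y n) - \<i> * ip (\<lambda>n. x n - \<i> * y n) (\<lambda>n. x n - \<i> * y n)
     = 4 * ip x y"
  proof -
    let ?f = "\<lambda>v n. complex_of_real (w n) * v n * cnj (v n)"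
    have s: "(\<lambda>n. ?f (\<lambda>n. x n + y n) n - ?f (\<lambda>n. x n - y n) n + \<i> * ?f (\<lambda>n. x n + \<i> * y n) n
        - \<i> * ?f (\<lambda>n. x n - \<i> * y n) n) sums
        (ip (\<lambda>n. x n + y n) (\<lambda>n. x n + y n) - ip (\<lambda>n. x n - y n) (\<lambda>n. x n - y n)
     + \<i> * ip (\<lambda>n. x n + \<i> * y n) (\<lambda>n. x n + \<i> * y n) - \<i> * ip (\<lambda>n. x n - \<i> * y n) (\<lambda>n. x n - \<i> * y n))"
      by (intro sums_diff sums_add sums_mult ip_sums Lp)
    have "(\<lambda>n. ?f (\<lambda>n. x n + y n) n - ?f (\<lambda>n. x n - y n) n + \<i> * ?f (\<lambda>n. x n + \<i> * y n) n
        - \<i> * ?f (\<lambda>n. x n - \<i> * y n) n) = (\<lambda>n. 4 * (complex_of_real (w n) * x n * cnj (y n)))"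
    proof
      fix n
      show "?f (\<lambda>n. x n + y n) n - ?f (\<lambda>n. x n - y n) n + \<i> * ?f (\<lambda>n. x n + \<i> * y n) n
        - \<i> * ?f (\<lambda>n. x n - \<i> * y n) n = 4 * (complex_of_real (w n) * x n * cnj (y n))"
        using polar_id[of "x n" "y n"] by algebra
    qed
    with s have "(\<lambda>n. 4 * (complex_of_real (w n) * x n * cnj (y n))) sums
        (ip (\<lambda>n. x n + y n) (\<lambda>n. x n + y n) - ip (\<lambda>n. x n - y n) (\<lambda>n. x n - y n)
     + \<i> * ip (\<lambda>n. x n + \<i> * y n) (\<lambda>n. x n + \<i> * y n) - \<i> * ip (\<lambda>n. x n - \<i> * y n) (\<lambda>n. x n - \<i> * y n))"
      by simp
    moreover have "(\<lambda>n. 4 * (complex_of_real (w n) * x n * cnj (y n))) sums (4 * ip x y)"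
      by (intro sums_mult ip_sums assms)
    ultimately show ?thesis using sums_unique2 by blast
  qed
  then show ?thesis using ip_self[OF Lp(1)] ip_self[OF Lp(2)] ip_self[OF Lp(3)] ip_self[OF Lp(4)]
    by simp
qed

lemma ip_dl_right: "ip x (dl k) = complex_of_real (w k) * x k"
proof -
  have "ip x (dl k) = (\<Sum>n. if n = k then complex_of_real (w k) * x k else 0)"
    unfolding ip_def dl_def by (intro suminf_cong) auto
  also have "\<dots> = complex_of_real (w k) * x k"
    using sums_single[of k "\<lambda>_. complex_of_real (w k) * x k"] by (rule sums_unique[symmetric])
  finally show ?thesis .
qed

lemma ip_dl_left: "L2 x \<Longrightarrow> ip (dl k) x = complex_of_real (w k) * cnj (x k)"
  using ip_dl_right[of x k] by (simp add: ip_conj[of x "dl k"] L2_dl)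

end


locale mob = bw +
  fixes a :: complex
  assumes a_lt: "cmod a < 1" and a_nz: "a \<noteq> 0"
begin

definition gam :: nat where "gam = b + 2"

lemma gam_pos: "gam > 0" unfolding gam_def by simp

lemma ncs: "z * cnj z = (complex_of_real (cmod z))^2"
  using complex_norm_square[of z] by simp

lemma ncs': "cnj z * z = (complex_of_real (cmod z))^2"
  using ncs[of z] by (simp add: mult.commute)

lemma sqrt_pow_sq: "(sqrt x ^ k)^2 = (sqrt x ^ 2) ^ k"
  by (simp add: power_mult[symmetric] mult.commute)

definition RR :: real where "RR = 1 / cmod a"
definition c0 :: real where "c0 = sqrt (1 - (cmod a)^2) ^ gam"
definition phi :: "complex \<Rightarrow> complex" where "phi z = mobius_phi a z"
definition kk :: "complex \<Rightarrow> complex" where "kk z = complex_of_real c0 / (1 - cnj a * z) ^ gam"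
definition qq :: "complex \<Rightarrow> complex" where "qq z = (1 - cnj a * z) ^ gam / complex_of_real c0"
definition U :: "(complex \<Rightarrow> complex) \<Rightarrow> complex \<Rightarrow> complex" where "U f = (\<lambda>z. f (phi z) * kk z)"
definition u :: "nat \<Rightarrow> nat \<Rightarrow> complex" where "u j n = taylor_coeff (\<lambda>z. kk z * phi z ^ n) j"

lemma a_pos: "cmod a > 0" using a_nz by simp

lemma RR_gt1: "RR > 1" unfolding RR_def using a_lt a_pos by (simp add: field_simps)

lemma one_minus_pos: "1 - (cmod a)^2 > 0"
proof -
  have "(cmod a)^2 < 1" using a_lt a_pos by (simp add: power_less_one_iff)
  then show ?thesis by simp
qed

lemma c0_pos: "c0 > 0" unfolding c0_def using one_minus_pos by simp

lemma c0_sq: "c0 ^ 2 = (1 - (cmod a)^2) ^ gam"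
proof -
  have "c0 ^ 2 = (sqrt (1 - (cmod a)^2) ^ 2) ^ gam" unfolding c0_def by (rule sqrt_pow_sq)
  also have "\<dots> = (1 - (cmod a)^2) ^ gam" using one_minus_pos by simp
  finally show ?thesis .
qed

lemma den_bound: assumes "cmod z \<le> t" shows "cmod (1 - cnj a * z) \<ge> 1 - cmod a * t"
proof -
  have "cmod (cnj a * z) = cmod a * cmod z" by (simp add: norm_mult)
  also have "\<dots> \<le> cmod a * t" using assms by (intro mult_left_mono) auto
  finally have "cmod (cnj a * z) \<le> cmod a * t" .
  moreover have "1 - cmod (cnj a * z) \<le> cmod (1 - cnj a * z)"
    using norm_triangle_ineq2[of 1 "cnj a * z"] by simp
  ultimately show ?thesis by linarith
qed

lemma den_nz: assumes "cmod z < RR" shows "1 - cnj a * z \<noteq> 0"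
proof -
  have "cmod a * cmod z < cmod a * RR" using assms a_pos by simp
  also have "\<dots> = 1" unfolding RR_def using a_pos by simp
  finally have "cmod (cnj a * z) < 1" by (simp add: norm_mult)
  then show ?thesis by (metis norm_one order_less_irrefl right_minus_eq)
qed

lemma den_nz_ball: "z \<in> ball 0 RR \<Longrightarrow> 1 - cnj a * z \<noteq> 0"
  by (intro den_nz) simp

lemma ball1_sub: "ball 0 1 \<subseteq> ball (0::complex) RR"
  using RR_gt1 by (intro subset_ball) simp

lemma cball1_sub: "cball 0 1 \<subseteq> ball (0::complex) RR"
  using RR_gt1 by (auto simp: dist_norm)

lemma phi_eq: "phi z = (a - z) / (1 - cnj a * z)"
  unfolding phi_def mobius_phi_def by simp

lemma phi_holo: "phi holomorphic_on ball 0 RR"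
  unfolding phi_eq[abs_def] by (intro holomorphic_intros) (use den_nz_ball in auto)

lemma kk_holo: "kk holomorphic_on ball 0 RR"
  unfolding kk_def[abs_def] by (intro holomorphic_intros) (use den_nz_ball in auto)

lemma qq_holo: "qq holomorphic_on A"
  unfolding qq_def[abs_def] using c0_pos by (intro holomorphic_intros) auto

lemma cnj_mult_self: "cnj z * z = complex_of_real ((cmod z)^2)"
  using ncs'[of z] by simp

lemma phi_ident:
  assumes "1 - cnj a * z \<noteq> 0"
  shows "(cmod (1 - cnj a * z))^2 - (cmod (a - z))^2 = (1 - (cmod a)^2) * (1 - (cmod z)^2)"
proof -
  have "complex_of_real ((cmod (1 - cnj a * z))^2 - (cmod (a - z))^2) =
        (1 - cnj a * z) * cnj (1 - cnj a * z) - (a - z) * cnj (a - z)"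
    by (simp only: of_real_diff complex_norm_square)
  also have "\<dots> = 1 - (cnj a * a) - (cnj z * z) + (cnj a * a) * (cnj z * z)"
    by (simp add: algebra_simps)
  also have "\<dots> = complex_of_real ((1 - (cmod a)^2) * (1 - (cmod z)^2))"
    by (simp only: cnj_mult_self) (simp add: algebra_simps)
  finally show ?thesis by (simp only: of_real_eq_iff)
qed

lemma phi_ball: assumes "z \<in> ball 0 1" shows "phi z \<in> ball 0 1"
proof -
  have z: "cmod z < 1" using assms by simp
  have d: "1 - cnj a * z \<noteq> 0" using den_nz[of z] z RR_gt1 by simp
  have "(1 - (cmod a)^2) * (1 - (cmod z)^2) > 0"
    using one_minus_pos z by (intro mult_pos_pos) (simp_all add: power_less_one_iff)
  then have "(cmod (a - z))^2 < (cmod (1 - cnj a * z))^2" using phi_ident[OF d] by linarith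
  then have "cmod (a - z) < cmod (1 - cnj a * z)"
    using power_less_imp_less_base by fastforce
  then show ?thesis using d by (simp add: phi_eq norm_divide divide_less_eq)
qed

lemma phi_phi: assumes "1 - cnj a * z \<noteq> 0" shows "phi (phi z) = z"
proof -
  have na: "1 - cnj a * a \<noteq> 0"
  proof -
    have "cnj a * a = complex_of_real ((cmod a)^2)" by (rule cnj_mult_self)
    then show ?thesis using one_minus_pos
      by (metis diff_numeral_special(9) eq_iff_diff_eq_0 less_numeral_extra(3) of_real_1 of_real_eq_iff)
  qed
  have e1: "a - phi z = z * (1 - cnj a * a) / (1 - cnj a * z)"
    using assms unfolding phi_eq by (simp add: field_simps)
  have e2: "1 - cnj a * phi z = (1 - cnj a * a) / (1 - cnj a * z)"
    using assms unfolding phi_eq by (simp add: field_simps)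
  have "phi (phi z) = (a - phi z) / (1 - cnj a * phi z)" by (rule phi_eq)
  also have "\<dots> = (z * (1 - cnj a * a) / (1 - cnj a * z)) / ((1 - cnj a * a) / (1 - cnj a * z))"
    by (simp only: e1 e2)
  also have "\<dots> = z" using assms na by simp
  finally show ?thesis .
qed

lemma den_phi: assumes "1 - cnj a * z \<noteq> 0"
  shows "1 - cnj a * phi z = complex_of_real (1 - (cmod a)^2) / (1 - cnj a * z)"
proof -
  have "1 - cnj a * phi z = ((1 - cnj a * z) - cnj a * (a - z)) / (1 - cnj a * z)"
    using assms unfolding phi_eq by (simp add: field_simps)
  also have "(1 - cnj a * z) - cnj a * (a - z) = 1 - cnj a * a" by (simp add: algebra_simps)
  also have "cnj a * a = complex_of_real ((cmod a)^2)" by (rule cnj_mult_self)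
  finally show ?thesis by simp
qed

lemma aux_pow_div: fixes c x y :: complex
  assumes "x \<noteq> 0" "y \<noteq> 0"
  shows "c / (x / y) ^ g * (c / y ^ g) = c ^ 2 / x ^ g"
  using assms by (simp add: power_divide power2_eq_square)

lemma kk_phi: assumes "1 - cnj a * z \<noteq> 0" shows "kk (phi z) * kk z = 1"
proof -
  have e: "complex_of_real (1 - (cmod a)^2) \<noteq> 0"
  proof
    assume "complex_of_real (1 - (cmod a)^2) = 0"
    then have "1 - (cmod a)^2 = 0" by (simp only: of_real_eq_0_iff)
    with one_minus_pos show False by simp
  qed
  have "kk (phi z) * kk z = complex_of_real c0 ^ 2 / complex_of_real (1 - (cmod a)^2) ^ gam"
    unfolding kk_def den_phi[OF assms] by (rule aux_pow_div[OF e assms])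
  also have "\<dots> = complex_of_real (c0 ^ 2) / complex_of_real ((1 - (cmod a)^2) ^ gam)"
    by simp
  also have "\<dots> = 1" unfolding c0_sq
  proof (rule divide_self)
    have "(1 - (cmod a)^2) ^ gam \<noteq> 0" using one_minus_pos by simp
    then show "complex_of_real ((1 - (cmod a)^2) ^ gam) \<noteq> 0" unfolding of_real_eq_0_iff .
  qed
  finally show ?thesis .
qed

lemma qq_kk: assumes "1 - cnj a * z \<noteq> 0" shows "qq z * kk z = 1"
  unfolding qq_def kk_def using assms c0_pos by simp

lemma U_holo: assumes "f holomorphic_on ball 0 1" shows "U f holomorphic_on ball 0 1"
proof -
  have "(f \<circ> phi) holomorphic_on ball 0 1"
    by (rule holomorphic_on_compose_gen[OF holomorphic_on_subset[OF phi_holo ball1_sub] assms])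
       (use phi_ball in auto)
  then have "(\<lambda>z. f (phi z) * kk z) holomorphic_on ball 0 1"
    using holomorphic_on_subset[OF kk_holo ball1_sub] by (intro holomorphic_intros) (auto simp: o_def)
  then show ?thesis unfolding U_def .
qed

lemma Cphi_holo: assumes "f holomorphic_on ball 0 1" shows "(\<lambda>z. f (phi z)) holomorphic_on ball 0 1"
proof -
  have "(f \<circ> phi) holomorphic_on ball 0 1"
    by (rule holomorphic_on_compose_gen[OF holomorphic_on_subset[OF phi_holo ball1_sub] assms])
       (use phi_ball in auto)
  then show ?thesis by (simp add: o_def)
qed

lemma g_holo: "(\<lambda>z. kk z * phi z ^ n) holomorphic_on ball 0 RR"
  using kk_holo phi_holo by (intro holomorphic_intros)

end


lemma tc_abs_summable:
  assumes "f holomorphic_on ball 0 1" "0 \<le> t" "t < 1"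
  shows "summable (\<lambda>n. cmod (taylor_coeff f n) * t ^ n)"
proof -
  have rad: "conv_radius (taylor_coeff f) \<ge> 1"
  proof (rule conv_radius_geI_ex)
    fix r :: real assume "0 < r" "ereal r < 1"
    then have "complex_of_real r \<in> ball 0 1" by simp
    from tc_sums[OF assms(1) this] show "\<exists>z. norm z = r \<and> summable (\<lambda>n. taylor_coeff f n * z ^ n)"
      using \<open>0 < r\<close> by (intro exI[of _ "complex_of_real r"]) (auto simp: sums_iff)
  qed
  have "ereal t < 1" using assms(3) by simp
  then have "ereal t < conv_radius (taylor_coeff f)" using rad by (rule less_le_trans)
  then have "ereal (norm (complex_of_real t)) < conv_radius (taylor_coeff f)"
    using assms(2) by simp
  from abs_summable_in_conv_radius[OF this] show ?thesis
    using assms(2) by (simp add: norm_mult norm_power)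
qed

context mob
begin

definition s0 :: real where "s0 = (1 - cmod a) / 4"
definition M0 :: real where "M0 = (cmod a + s0) / (1 - cmod a * s0)"
definition K0 :: real where "K0 = c0 / (1 - cmod a) ^ gam"

lemma s0_pos: "s0 > 0" unfolding s0_def using a_lt by simp
lemma s0_lt1: "s0 < 1"
proof -
  have "1 - cmod a < 4" using norm_ge_zero[of a] by linarith
  then show ?thesis unfolding s0_def by simp
qed
lemma as0: "cmod a * s0 < 1"
proof -
  have "cmod a * s0 \<le> 1 * s0" using a_lt s0_pos by (intro mult_right_mono) auto
  then show ?thesis using s0_lt1 by linarith
qed
lemma M0_nonneg: "M0 \<ge> 0" unfolding M0_def using as0 s0_pos by simp
lemma M0_lt1: "M0 < 1"
proof -
  have "s0 * (1 + cmod a) < 1 - cmod a"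
  proof -
    have "s0 * (1 + cmod a) = (1 - cmod a) * ((1 + cmod a) / 4)" unfolding s0_def by simp
    also have "\<dots> < (1 - cmod a) * 1" using a_lt by (intro mult_strict_left_mono) auto
    finally show ?thesis by simp
  qed
  then have "cmod a + s0 < 1 - cmod a * s0" by (simp add: algebra_simps)
  then show ?thesis unfolding M0_def using as0 by simp
qed
lemma K0_pos: "K0 > 0" unfolding K0_def using c0_pos a_lt by simp

lemma phi_bound: assumes "cmod z \<le> s0" shows "cmod (phi z) \<le> M0"
proof -
  have n: "cmod (a - z) \<le> cmod a + s0"
    using norm_triangle_ineq4[of a z] assms by linarith
  have d: "cmod (1 - cnj a * z) \<ge> 1 - cmod a * s0" by (rule den_bound[OF assms])
  have dp: "1 - cmod a * s0 > 0" using as0 by simp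
  have "cmod (phi z) = cmod (a - z) / cmod (1 - cnj a * z)" by (simp add: phi_eq norm_divide)
  also have "\<dots> \<le> (cmod a + s0) / (1 - cmod a * s0)"
    by (rule frac_le) (use n d dp s0_pos in auto)
  finally show ?thesis unfolding M0_def .
qed

lemma kk_bound: assumes "cmod z \<le> 1" shows "cmod (kk z) \<le> K0"
proof -
  have d: "cmod (1 - cnj a * z) \<ge> 1 - cmod a" using den_bound[OF assms] by simp
  have dp: "1 - cmod a > 0" using a_lt by simp
  have "cmod (kk z) = c0 / cmod (1 - cnj a * z) ^ gam"
    unfolding kk_def using c0_pos by (simp add: norm_divide norm_power)
  also have "\<dots> \<le> c0 / (1 - cmod a) ^ gam"
  proof (rule divide_left_mono)
    show "(1 - cmod a) ^ gam \<le> cmod (1 - cnj a * z) ^ gam" using d dp by (intro power_mono) auto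
    show "0 \<le> c0" using c0_pos by simp
    have "0 < cmod (1 - cnj a * z)" using d dp by linarith
    then show "0 < cmod (1 - cnj a * z) ^ gam * (1 - cmod a) ^ gam"
      using dp by (intro mult_pos_pos zero_less_power)
  qed
  finally show ?thesis unfolding K0_def .
qed

lemma u_bound: "cmod (u j n) \<le> K0 * M0 ^ n / s0 ^ j"
proof -
  let ?g = "\<lambda>z. kk z * phi z ^ n"
  have sub: "cball 0 s0 \<subseteq> ball (0::complex) RR" using s0_lt1 RR_gt1 by (auto simp: dist_norm)
  have "cmod ((deriv ^^ j) ?g 0) \<le> fact j * (K0 * M0 ^ n) / s0 ^ j"
  proof (rule Cauchy_inequality)
    show "?g holomorphic_on ball 0 s0"
      using g_holo by (rule holomorphic_on_subset) (use sub in auto)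
    show "continuous_on (cball 0 s0) ?g"
      using holomorphic_on_imp_continuous_on[OF g_holo] by (rule continuous_on_subset) (rule sub)
    show "0 < s0" by (rule s0_pos)
  next
    fix x :: complex assume "cmod (0 - x) = s0"
    then have x: "cmod x = s0" by simp
    have "cmod (kk x) \<le> K0" using x s0_lt1 by (intro kk_bound) simp
    moreover have "cmod (phi x) ^ n \<le> M0 ^ n" using phi_bound[of x] x by (intro power_mono) auto
    ultimately show "cmod (?g x) \<le> K0 * M0 ^ n"
      by (simp add: norm_mult norm_power mult_mono K0_pos less_imp_le)
  qed
  then show ?thesis unfolding u_def taylor_coeff_def by (simp add: norm_divide field_simps)
qed

lemma u_sums: assumes "z \<in> ball 0 1" shows "(\<lambda>j. u j n * z ^ j) sums (kk z * phi z ^ n)"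
  unfolding u_def by (rule tc_sums[OF holomorphic_on_subset[OF g_holo ball1_sub] assms])

lemma U_coeff:
  assumes hf: "f holomorphic_on ball 0 1"
  shows "summable (\<lambda>n. u j n * taylor_coeff f n)"
    and "taylor_coeff (U f) j = (\<Sum>n. u j n * taylor_coeff f n)"
proof -
  define F where "F = taylor_coeff f"
  have absF: "summable (\<lambda>n. cmod (F n) * M0 ^ n)"
    unfolding F_def by (rule tc_abs_summable[OF hf M0_nonneg M0_lt1])
  have sumA: "summable (\<lambda>n. u j n * F n)" for j
  proof (rule summable_norm_cancel, rule summable_le_real)
    fix n
    show "0 \<le> norm (u j n * F n)" by simp
    have "norm (u j n * F n) = cmod (u j n) * cmod (F n)" by (simp add: norm_mult)
    also have "\<dots> \<le> (K0 * M0 ^ n / s0 ^ j) * cmod (F n)"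
      by (intro mult_right_mono u_bound) simp
    also have "\<dots> = (K0 / s0 ^ j) * (cmod (F n) * M0 ^ n)" by simp
    finally show "norm (u j n * F n) \<le> (K0 / s0 ^ j) * (cmod (F n) * M0 ^ n)" .
  next
    show "summable (\<lambda>n. (K0 / s0 ^ j) * (cmod (F n) * M0 ^ n))"
      by (rule summable_mult[OF absF])
  qed
  then show "summable (\<lambda>n. u j n * taylor_coeff f n)" for j unfolding F_def .
  have key: "(\<lambda>j. (\<Sum>n. u j n * F n) * z ^ j) sums U f z" if z: "z \<in> ball 0 s0" for z
  proof -
    define G where "G n j = F n * (u j n * z ^ j)" for n j
    define r where "r = cmod z / s0"
    have z1: "z \<in> ball 0 1" using z s0_lt1 by simp
    have pz: "phi z \<in> ball 0 1" by (rule phi_ball[OF z1])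
    have r0: "0 \<le> r" and r1: "r < 1" using z s0_pos by (auto simp: r_def)
    have fs: "(\<lambda>n. F n * phi z ^ n) sums f (phi z)"
      unfolding F_def by (rule tc_sums[OF hf pz])
    have rowb: "norm (G n j) \<le> (cmod (F n) * M0 ^ n * K0) * r ^ j" for n j
    proof -
      have "norm (G n j) = cmod (F n) * (cmod (u j n) * cmod z ^ j)"
        by (simp add: G_def norm_mult norm_power)
      also have "\<dots> \<le> cmod (F n) * ((K0 * M0 ^ n / s0 ^ j) * cmod z ^ j)"
        by (intro mult_left_mono mult_right_mono u_bound) auto
      also have "\<dots> = (cmod (F n) * M0 ^ n * K0) * r ^ j"
        by (simp add: r_def power_divide)
      finally show ?thesis .
    qed
    have geo: "summable (\<lambda>j. r ^ j)" using r0 r1 by (intro summable_geometric) simp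
    have rows: "summable (\<lambda>j. norm (G n j))" for n
    proof (rule summable_le_real[OF _ rowb])
      show "0 \<le> norm (G n j)" for j by simp
      show "summable (\<lambda>j. (cmod (F n) * M0 ^ n * K0) * r ^ j)" by (rule summable_mult[OF geo])
    qed
    have rowsum: "(\<Sum>j. norm (G n j)) \<le> (K0 / (1 - r)) * (cmod (F n) * M0 ^ n)" for n
    proof -
      have "(\<Sum>j. norm (G n j)) \<le> (\<Sum>j. (cmod (F n) * M0 ^ n * K0) * r ^ j)"
        by (intro suminf_le rowb rows summable_mult geo)
      also have "\<dots> = (cmod (F n) * M0 ^ n * K0) * (1 / (1 - r))"
      proof -
        have "(\<lambda>j. (cmod (F n) * M0 ^ n * K0) * r ^ j) sums ((cmod (F n) * M0 ^ n * K0) * (1 / (1 - r)))"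
        proof (rule sums_mult)
          have "norm r < 1" using r0 r1 by simp
          then show "(\<lambda>j. r ^ j) sums (1 / (1 - r))" using geometric_sums[of r] by simp
        qed
        then show ?thesis by (rule sums_unique[symmetric])
      qed
      also have "\<dots> = (K0 / (1 - r)) * (cmod (F n) * M0 ^ n)" by (simp add: mult_ac)
      finally show ?thesis .
    qed
    have outer: "summable (\<lambda>n. \<Sum>j. norm (G n j))"
    proof (rule summable_le_real[OF _ rowsum])
      show "0 \<le> (\<Sum>j. norm (G n j))" for n by (intro suminf_nonneg rows) simp
      show "summable (\<lambda>n. K0 / (1 - r) * (cmod (F n) * M0 ^ n))" by (rule summable_mult[OF absF])
    qed
    have sw: "(\<lambda>j. \<Sum>n. G n j) sums (\<Sum>n. \<Sum>j. G n j)"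
      by (rule dswap(1)[OF rows outer])
    have inner: "(\<Sum>j. G n j) = F n * (kk z * phi z ^ n)" for n
    proof -
      have "(\<lambda>j. F n * (u j n * z ^ j)) sums (F n * (kk z * phi z ^ n))"
        by (rule sums_mult[OF u_sums[OF z1]])
      then show ?thesis unfolding G_def by (rule sums_unique[symmetric])
    qed
    have tot: "(\<Sum>n. \<Sum>j. G n j) = U f z"
    proof -
      have "(\<lambda>n. F n * phi z ^ n * kk z) sums (f (phi z) * kk z)"
        by (rule sums_mult2[OF fs])
      then have "(\<lambda>n. \<Sum>j. G n j) sums (f (phi z) * kk z)"
        unfolding inner by (simp add: mult_ac)
      then show ?thesis unfolding U_def by (rule sums_unique[symmetric])
    qed
    have col: "(\<Sum>n. G n j) = (\<Sum>n. u j n * F n) * z ^ j" for j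
    proof -
      have "(\<lambda>n. u j n * F n * z ^ j) sums ((\<Sum>n. u j n * F n) * z ^ j)"
        by (rule sums_mult2[OF summable_sums[OF sumA]])
      then show ?thesis unfolding G_def by (simp add: mult_ac sums_iff)
    qed
    show ?thesis using sw unfolding tot col .
  qed
  show "taylor_coeff (U f) j = (\<Sum>n. u j n * taylor_coeff f n)"
    using tc_unique[OF s0_pos key] unfolding F_def .
qed

definition qc :: "nat \<Rightarrow> complex" where "qc i = taylor_coeff qq i"

lemma qq_poly: "qq z = (\<Sum>k\<le>gam. (of_nat (gam choose k) * (- cnj a) ^ k / complex_of_real c0) * z ^ k)"
proof -
  have "qq z = (- cnj a * z + 1) ^ gam / complex_of_real c0" unfolding qq_def by simp
  also have "(- cnj a * z + 1) ^ gam = (\<Sum>k\<le>gam. of_nat (gam choose k) * (- cnj a * z) ^ k * 1 ^ (gam - k))"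
    by (rule binomial_ring)
  also have "\<dots> / complex_of_real c0 = (\<Sum>k\<le>gam. (of_nat (gam choose k) * (- cnj a) ^ k / complex_of_real c0) * z ^ k)"
    unfolding sum_divide_distrib
  proof (rule sum.cong[OF refl])
    fix k
    show "of_nat (gam choose k) * (- cnj a * z) ^ k * 1 ^ (gam - k) / complex_of_real c0 =
          of_nat (gam choose k) * (- cnj a) ^ k / complex_of_real c0 * z ^ k"
      by (simp only: power_mult_distrib power_one mult_1_right times_divide_eq_left mult.assoc)
  qed
  finally show ?thesis .
qed

lemma qc_zero: assumes "i > gam" shows "qc i = 0"
proof -
  have "qc i = taylor_coeff (\<lambda>z. \<Sum>k\<le>gam. (of_nat (gam choose k) * (- cnj a) ^ k / complex_of_real c0) * z ^ k) i"
    unfolding qc_def by (simp add: qq_poly[abs_def])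
  also have "\<dots> = 0" using assms by (subst tc_poly) simp
  finally show ?thesis .
qed

lemma Q_coeff:
  assumes "g holomorphic_on ball 0 1"
  shows "taylor_coeff (\<lambda>z. qq z * g z) i = (\<Sum>k=0..i. qc k * taylor_coeff g (i - k))"
  unfolding qc_def by (rule tc_mult[OF qq_holo assms]) simp

lemma C_coeff:
  assumes "f holomorphic_on ball 0 1"
  shows "taylor_coeff (\<lambda>z. f (phi z)) i = (\<Sum>k=0..i. qc k * taylor_coeff (U f) (i - k))"
proof -
  have "taylor_coeff (\<lambda>z. f (phi z)) i = taylor_coeff (\<lambda>z. qq z * U f z) i"
  proof (rule tc_cong[of 1])
    fix z :: complex assume "z \<in> ball 0 1"
    then have "1 - cnj a * z \<noteq> 0" using ball1_sub den_nz_ball by blast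
    then have "qq z * kk z = 1" by (rule qq_kk)
    then show "f (phi z) = qq z * U f z" unfolding U_def by (simp add: mult_ac)
  qed simp
  also have "\<dots> = (\<Sum>k=0..i. qc k * taylor_coeff (U f) (i - k))"
    by (rule Q_coeff[OF U_holo[OF assms]])
  finally show ?thesis .
qed

end


lemma deriv_inv_pow:
  fixes c z :: complex
  assumes d: "1 - c * z \<noteq> 0"
  shows "((\<lambda>z. inverse ((1 - c * z) ^ p)) has_field_derivative
          (of_nat p * c * inverse ((1 - c * z) ^ Suc p))) (at z)"
proof -
  have d1: "((\<lambda>z. (1 - c * z) ^ p) has_field_derivative (of_nat p * (1 - c * z) ^ (p - 1) * (- c))) (at z)"
    by (auto intro!: derivative_eq_intros)
  have "((\<lambda>z. inverse ((1 - c * z) ^ p)) has_field_derivative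
         (- ((of_nat p * (1 - c * z) ^ (p - 1) * (- c)) * inverse (((1 - c * z) ^ p) ^ Suc (Suc 0))))) (at z)"
    by (rule DERIV_inverse_fun[OF d1]) (use d in simp)
  moreover have "- ((of_nat p * (1 - c * z) ^ (p - 1) * (- c)) * inverse (((1 - c * z) ^ p) ^ Suc (Suc 0)))
        = of_nat p * c * inverse ((1 - c * z) ^ Suc p)"
  proof (cases p)
    case 0 then show ?thesis by simp
  next
    case (Suc q)
    define D where "D = 1 - c * z"
    have D: "D \<noteq> 0" using d by (simp add: D_def)
    have "- ((of_nat p * D ^ (p - 1) * (- c)) * inverse ((D ^ p) ^ Suc (Suc 0)))
        = of_nat p * c * (D ^ q / (D ^ Suc q * D ^ Suc q))"
      using Suc by (simp add: divide_inverse power2_eq_square)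
    also have "D ^ q / (D ^ Suc q * D ^ Suc q) = inverse (D ^ Suc p)"
      using Suc D by (simp add: field_simps)
    finally show ?thesis unfolding D_def .
  qed
  ultimately show ?thesis by (rule DERIV_cong)
qed

lemma higher_inv_pow:
  fixes c :: complex
  shows "\<forall>z. 1 - c * z \<noteq> 0 \<longrightarrow>
    (deriv ^^ k) (\<lambda>z. inverse ((1 - c * z) ^ m)) z = c ^ k * of_nat (pochhammer m k) * inverse ((1 - c * z) ^ (m + k))"
proof (induction k)
  case 0 then show ?case by simp
next
  case (Suc k)
  show ?case
  proof (intro allI impI)
    fix z :: complex assume z: "1 - c * z \<noteq> 0"
    define S where "S = {z. 1 - c * z \<noteq> 0}"
    have oS: "open S" unfolding S_def
      by (intro open_Collect_neq continuous_intros)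
    have ev: "eventually (\<lambda>x. x \<in> S) (nhds z)" using z oS by (intro eventually_nhds_in_open) (auto simp: S_def)
    have "(deriv ^^ Suc k) (\<lambda>z. inverse ((1 - c * z) ^ m)) z
          = deriv (\<lambda>x. c ^ k * of_nat (pochhammer m k) * inverse ((1 - c * x) ^ (m + k))) z"
      by simp (rule deriv_cong_ev[OF eventually_mono[OF ev]], use Suc.IH in \<open>auto simp: S_def\<close>)
    also have "\<dots> = c ^ k * of_nat (pochhammer m k) * (of_nat (m + k) * c * inverse ((1 - c * z) ^ Suc (m + k)))"
      by (rule DERIV_imp_deriv, rule DERIV_cmult, rule deriv_inv_pow[OF z])
    also have "\<dots> = c ^ Suc k * of_nat (pochhammer m (Suc k)) * inverse ((1 - c * z) ^ (m + Suc k))"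
      by (simp add: pochhammer_Suc algebra_simps)
    finally show "(deriv ^^ Suc k) (\<lambda>z. inverse ((1 - c * z) ^ m)) z =
      c ^ Suc k * of_nat (pochhammer m (Suc k)) * inverse ((1 - c * z) ^ (m + Suc k))" .
  qed
qed

lemma tc_inv_pow:
  fixes c :: complex
  shows "taylor_coeff (\<lambda>z. inverse ((1 - c * z) ^ m)) k = c ^ k * of_nat (pochhammer m k) / fact k"
  using higher_inv_pow[of c k m] unfolding taylor_coeff_def by auto

lemma tc_binom:
  fixes x :: complex
  shows "taylor_coeff (\<lambda>z. (x - z) ^ n) i = (if i \<le> n then of_nat (n choose i) * x ^ (n - i) * (-1) ^ i else 0)"
proof -
  have e: "(x - z) ^ n = (\<Sum>k\<le>n. (of_nat (n choose k) * x ^ (n - k) * (-1) ^ k) * z ^ k)" for z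
  proof -
    have "(x - z) ^ n = (- z + x) ^ n" by simp
    also have "\<dots> = (\<Sum>k\<le>n. of_nat (n choose k) * (- z) ^ k * x ^ (n - k))"
      by (rule binomial_ring)
    also have "\<dots> = (\<Sum>k\<le>n. (of_nat (n choose k) * x ^ (n - k) * (-1) ^ k) * z ^ k)"
    proof (rule sum.cong[OF refl])
      fix k show "of_nat (n choose k) * (- z) ^ k * x ^ (n - k) = (of_nat (n choose k) * x ^ (n - k) * (-1) ^ k) * z ^ k"
        unfolding power_minus[of z k] by (simp only: mult_ac)
    qed
    finally show ?thesis .
  qed
  show ?thesis unfolding e by (rule tc_poly)
qed

context mob
begin

lemma kkphi_eq:
  assumes "1 - cnj a * z \<noteq> 0"
  shows "kk z * phi z ^ n = complex_of_real c0 * ((a - z) ^ n * inverse ((1 - cnj a * z) ^ (n + gam)))"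
proof -
  define D where "D = 1 - cnj a * z"
  have D: "D \<noteq> 0" using assms by (simp add: D_def)
  have "kk z * phi z ^ n = complex_of_real c0 / D ^ gam * ((a - z) ^ n / D ^ n)"
    unfolding kk_def phi_eq D_def by (simp add: power_divide)
  also have "\<dots> = complex_of_real c0 * ((a - z) ^ n * inverse (D ^ (n + gam)))"
    using D by (simp add: power_add divide_inverse mult_ac)
  finally show ?thesis unfolding D_def .
qed

definition TT :: "nat \<Rightarrow> nat \<Rightarrow> nat \<Rightarrow> complex" where
  "TT n j i = of_nat (n choose i) * a ^ (n - i) * (-1) ^ i *
     (cnj a ^ (j - i) * of_nat (pochhammer (n + gam) (j - i)) / fact (j - i))"

lemma u_formula: "u j n = complex_of_real c0 * (\<Sum>i\<in>{0..min j n}. TT n j i)"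
proof -
  have "u j n = taylor_coeff (\<lambda>z. complex_of_real c0 * ((a - z) ^ n * inverse ((1 - cnj a * z) ^ (n + gam)))) j"
    unfolding u_def
  proof (rule tc_cong[of RR])
    show "RR > 0" using RR_gt1 by simp
    fix z :: complex assume "z \<in> ball 0 RR"
    then show "kk z * phi z ^ n = complex_of_real c0 * ((a - z) ^ n * inverse ((1 - cnj a * z) ^ (n + gam)))"
      by (intro kkphi_eq den_nz_ball)
  qed
  also have "\<dots> = complex_of_real c0 * taylor_coeff (\<lambda>z. (a - z) ^ n * inverse ((1 - cnj a * z) ^ (n + gam))) j"
  proof (rule tc_cmult[of _ RR])
    show "(\<lambda>z. (a - z) ^ n * inverse ((1 - cnj a * z) ^ (n + gam))) holomorphic_on ball 0 RR"
      by (intro holomorphic_intros) (use den_nz_ball in auto)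
    show "RR > 0" using RR_gt1 by simp
  qed
  also have "taylor_coeff (\<lambda>z. (a - z) ^ n * inverse ((1 - cnj a * z) ^ (n + gam))) j =
     (\<Sum>i=0..j. taylor_coeff (\<lambda>z. (a - z) ^ n) i * taylor_coeff (\<lambda>z. inverse ((1 - cnj a * z) ^ (n + gam))) (j - i))"
  proof (rule tc_mult[of _ RR])
    show "(\<lambda>z. (a - z) ^ n) holomorphic_on ball 0 RR" by (intro holomorphic_intros)
    show "(\<lambda>z. inverse ((1 - cnj a * z) ^ (n + gam))) holomorphic_on ball 0 RR"
      by (intro holomorphic_intros) (use den_nz_ball in auto)
    show "RR > 0" using RR_gt1 by simp
  qed
  also have "\<dots> = (\<Sum>i=0..j. if i \<le> n then TT n j i else 0)"
    unfolding tc_binom tc_inv_pow TT_def by (intro sum.cong refl) (simp add: mult_ac)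
  also have "\<dots> = (\<Sum>i\<in>{0..min j n}. TT n j i)"
  proof -
    have "(\<Sum>i=0..j. if i \<le> n then TT n j i else 0) = (\<Sum>i\<in>{0..min j n}. if i \<le> n then TT n j i else 0)"
      by (rule sum.mono_neutral_right) auto
    also have "\<dots> = (\<Sum>i\<in>{0..min j n}. TT n j i)" by (intro sum.cong refl) auto
    finally show ?thesis .
  qed
  finally show ?thesis .
qed

lemma poch_nat: "pochhammer (real b + 2) n = real (pochhammer gam n)"
  unfolding gam_def by (simp add: pochhammer_of_nat[symmetric] add.commute)

lemma herm_real:
  assumes "i \<le> j" "i \<le> n"
  shows "w j * (real (n choose i) * real (pochhammer (n + gam) (j - i)) / fact (j - i)) =
         w n * (real (j choose i) * real (pochhammer (j + gam) (n - i)) / fact (n - i))"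
proof -
  define Pj where "Pj = real (pochhammer gam j)"
  define Pn where "Pn = real (pochhammer gam n)"
  define Pj' where "Pj' = real (pochhammer (j + gam) (n - i))"
  define Pn' where "Pn' = real (pochhammer (n + gam) (j - i))"
  have nat_id: "pochhammer gam j * pochhammer (j + gam) (n - i) = pochhammer gam n * pochhammer (n + gam) (j - i)"
  proof -
    have "pochhammer gam (j + (n - i)) = pochhammer gam j * pochhammer (gam + j) (n - i)"
      using pochhammer_product'[of gam j "n - i"] by simp
    moreover have "pochhammer gam (n + (j - i)) = pochhammer gam n * pochhammer (gam + n) (j - i)"
      using pochhammer_product'[of gam n "j - i"] by simp
    moreover have "j + (n - i) = n + (j - i)" using assms by simp
    ultimately show ?thesis by (simp add: add.commute)
  qed
  have id: "Pj * Pj' = Pn * Pn'"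
    unfolding Pj_def Pj'_def Pn_def Pn'_def using nat_id by (metis of_nat_mult)
  have pos: "Pj > 0" "Pn > 0"
    unfolding Pj_def Pn_def using pochhammer_pos[of "real gam" j] pochhammer_pos[of "real gam" n]
    by (simp_all add: pochhammer_of_nat[symmetric] gam_def)
  have wj: "w j = fact j / Pj" unfolding w_eq poch_nat Pj_def ..
  have wn: "w n = fact n / Pn" unfolding w_eq poch_nat Pn_def ..
  have cn: "real (n choose i) = fact n / (fact i * fact (n - i))" using binomial_fact[OF assms(2)] by simp
  have cj: "real (j choose i) = fact j / (fact i * fact (j - i))" using binomial_fact[OF assms(1)] by simp
  have Pn'e: "Pn' = Pj * Pj' / Pn" using id pos by (simp add: field_simps)
  show ?thesis
    unfolding Pj'_def[symmetric] Pn'_def[symmetric] wj wn cn cj Pn'e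
    using pos by (simp add: field_simps)
qed

lemma herm_term:
  assumes "i \<le> j" "i \<le> n"
  shows "complex_of_real (w j) * TT n j i = complex_of_real (w n) * cnj (TT j n i)"
proof -
  have r: "complex_of_real (w j * (real (n choose i) * real (pochhammer (n + gam) (j - i)) / fact (j - i))) =
         complex_of_real (w n * (real (j choose i) * real (pochhammer (j + gam) (n - i)) / fact (n - i)))"
    using herm_real[OF assms] by simp
  have l: "complex_of_real (w j) * TT n j i =
     complex_of_real (w j * (real (n choose i) * real (pochhammer (n + gam) (j - i)) / fact (j - i))) *
     (a ^ (n - i) * (-1) ^ i * cnj a ^ (j - i))"
    unfolding TT_def by (simp add: mult_ac)
  have rr: "complex_of_real (w n) * cnj (TT j n i) =
     complex_of_real (w n * (real (j choose i) * real (pochhammer (j + gam) (n - i)) / fact (n - i))) *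
     (a ^ (n - i) * (-1) ^ i * cnj a ^ (j - i))"
    unfolding TT_def by (simp add: mult_ac)
  show ?thesis unfolding l rr r ..
qed

lemma hermitian: "complex_of_real (w j) * u j n = complex_of_real (w n) * cnj (u n j)"
proof -
  have "complex_of_real (w j) * u j n = complex_of_real c0 * (\<Sum>i\<in>{0..min j n}. complex_of_real (w j) * TT n j i)"
    unfolding u_formula by (simp add: sum_distrib_left mult_ac)
  also have "\<dots> = complex_of_real c0 * (\<Sum>i\<in>{0..min j n}. complex_of_real (w n) * cnj (TT j n i))"
    by (intro arg_cong[where f="\<lambda>x. complex_of_real c0 * x"] sum.cong refl herm_term) auto
  also have "\<dots> = complex_of_real (w n) * cnj (u n j)"
    unfolding u_formula by (simp add: sum_distrib_left mult_ac min.commute)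
  finally show ?thesis .
qed

end


context mob
begin

definition Us :: "(nat \<Rightarrow> complex) \<Rightarrow> nat \<Rightarrow> complex" where "Us x = (\<lambda>j. \<Sum>n. u j n * x n)"
definition mk :: "(nat \<Rightarrow> complex) \<Rightarrow> complex \<Rightarrow> complex" where "mk x = (\<lambda>z. \<Sum>n. x n * z ^ n)"

lemma inv_w_summable: assumes "0 \<le> t" "t < 1" shows "summable (\<lambda>n. t ^ n / w n)"
proof -
  have h: "(\<lambda>z. inverse ((1 - 1 * z) ^ gam)) holomorphic_on ball 0 1"
  proof (intro holomorphic_intros)
    fix z :: complex assume "z \<in> ball 0 1"
    then have "z \<noteq> 1" by auto
    then show "(1 - 1 * z) ^ gam \<noteq> 0" by simp
  qed
  have "summable (\<lambda>n. cmod (taylor_coeff (\<lambda>z. inverse ((1 - 1 * z) ^ gam)) n) * t ^ n)"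
    by (rule tc_abs_summable[OF h assms])
  moreover have "cmod (taylor_coeff (\<lambda>z. inverse ((1 - 1 * z) ^ gam)) n) = 1 / w n" for n
  proof -
    have "taylor_coeff (\<lambda>z. inverse ((1 - 1 * z) ^ gam)) n = of_nat (pochhammer gam n) / fact n"
      unfolding tc_inv_pow by simp
    also have "\<dots> = complex_of_real (1 / w n)" unfolding inv_w poch_nat by simp
    finally show ?thesis using w_pos[of n] by (simp add: norm_divide)
  qed
  ultimately show ?thesis by simp
qed

lemma L2_powser_summable:
  assumes "L2 x" "cmod z < 1"
  shows "summable (\<lambda>n. norm (x n * z ^ n))"
proof (rule summable_le_real)
  fix n
  show "0 \<le> norm (x n * z ^ n)" by simp
  have "norm (x n * z ^ n) = (sqrt (w n) * cmod (x n)) * (cmod z ^ n / sqrt (w n))"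
    using w_pos[of n] by (simp add: norm_mult norm_power)
  also have "\<dots> \<le> ((sqrt (w n) * cmod (x n))^2 + (cmod z ^ n / sqrt (w n))^2) / 2"
    by (rule sq_ineq2)
  also have "\<dots> = (w n * (cmod (x n))^2 + (cmod z * cmod z) ^ n / w n) / 2"
  proof -
    have sw: "(sqrt (w n))^2 = w n" using w_pos[of n] by simp
    have e1: "(sqrt (w n) * cmod (x n))^2 = w n * (cmod (x n))^2"
      unfolding power_mult_distrib sw ..
    have e2: "(cmod z ^ n / sqrt (w n))^2 = (cmod z * cmod z) ^ n / w n"
      unfolding power_divide sw power_mult_distrib[symmetric]
      by (simp only: power2_eq_square power_mult_distrib)
    show ?thesis unfolding e1 e2 ..
  qed
  finally show "norm (x n * z ^ n) \<le> (w n * (cmod (x n))^2 + (cmod z * cmod z) ^ n / w n) / 2" .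
next
  have "cmod z * cmod z \<le> cmod z * 1" using assms(2) by (intro mult_left_mono) auto
  then have "cmod z * cmod z < 1" using assms(2) by linarith
  then have "summable (\<lambda>n. (cmod z * cmod z) ^ n / w n)"
    by (intro inv_w_summable) auto
  then show "summable (\<lambda>n. (w n * (cmod (x n))^2 + (cmod z * cmod z) ^ n / w n) / 2)"
    using assms(1) unfolding L2_def by (intro summable_divide summable_add)
qed

lemma mk_sums: assumes "L2 x" "z \<in> ball 0 1" shows "(\<lambda>n. x n * z ^ n) sums mk x z"
  unfolding mk_def using summable_norm_cancel[OF L2_powser_summable[OF assms(1)]] assms(2)
  by (simp add: summable_sums)

lemma mk_holo: assumes "L2 x" shows "mk x holomorphic_on ball 0 1"
proof -
  have rad: "fps_conv_radius (Abs_fps x) \<ge> 1"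
    unfolding fps_conv_radius_def
  proof (rule conv_radius_geI_ex')
    fix r :: real assume r: "0 < r" "ereal r < 1"
    then have "cmod (complex_of_real r) < 1" by simp
    from summable_norm_cancel[OF L2_powser_summable[OF assms this]]
    show "summable (\<lambda>n. fps_nth (Abs_fps x) n * complex_of_real r ^ n)" by simp
  qed
  have sub: "ball 0 1 \<subseteq> eball (0::complex) (fps_conv_radius (Abs_fps x))"
  proof (rule subsetI)
    fix z :: complex assume "z \<in> ball 0 1"
    then have "ereal (norm z) < 1" by simp
    then have "ereal (norm z) < fps_conv_radius (Abs_fps x)" using rad by (rule less_le_trans)
    then show "z \<in> eball 0 (fps_conv_radius (Abs_fps x))" by simp
  qed
  have "eval_fps (Abs_fps x) holomorphic_on ball 0 1"
    by (rule holomorphic_on_eval_fps[OF sub])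
  moreover have "eval_fps (Abs_fps x) = mk x" unfolding eval_fps_def mk_def by simp
  ultimately show ?thesis by simp
qed

lemma tc_mk: assumes "L2 x" shows "taylor_coeff (mk x) n = x n"
  by (rule tc_unique[of 1]) (use mk_sums[OF assms] in auto)

lemma Us_tc: assumes "f holomorphic_on ball 0 1" shows "Us (taylor_coeff f) = taylor_coeff (U f)"
  unfolding Us_def using U_coeff(2)[OF assms] by auto

lemma Us_summable: assumes "L2 x" shows "summable (\<lambda>n. u j n * x n)"
  using U_coeff(1)[OF mk_holo[OF assms], of j] unfolding tc_mk[OF assms] .

lemma UU: assumes "z \<in> ball 0 1" shows "U (U f) z = f z"
proof -
  have d: "1 - cnj a * z \<noteq> 0" using assms ball1_sub den_nz_ball by blast
  have "U (U f) z = f (phi (phi z)) * (kk (phi z) * kk z)" unfolding U_def by (simp add: mult_ac)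
  also have "\<dots> = f z" using phi_phi[OF d] kk_phi[OF d] by simp
  finally show ?thesis .
qed

lemma Us_Us_tc: assumes "f holomorphic_on ball 0 1" shows "Us (Us (taylor_coeff f)) = taylor_coeff f"
proof -
  have "Us (Us (taylor_coeff f)) = taylor_coeff (U (U f))"
    unfolding Us_tc[OF assms] Us_tc[OF U_holo[OF assms]] ..
  also have "\<dots> = taylor_coeff f"
    by (rule ext, rule tc_cong[of 1]) (use UU in auto)
  finally show ?thesis .
qed

lemma Us_Us: assumes "L2 x" shows "Us (Us x) = x"
  using Us_Us_tc[OF mk_holo[OF assms]] unfolding tc_mk[OF assms, abs_def] by simp

lemma dl_tc: "dl n = taylor_coeff (\<lambda>z. z ^ n)"
  unfolding dl_def tc_monom by auto

lemma zpow_holo: "(\<lambda>z. z ^ n) holomorphic_on A" by (intro holomorphic_intros)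

lemma Us_dl: "Us (dl n) = (\<lambda>j. u j n)"
proof
  fix j
  have "Us (dl n) j = (\<Sum>m. if m = n then u j n else 0)"
    unfolding Us_def dl_def by (intro suminf_cong) auto
  also have "\<dots> = u j n" by (rule sums_unique[symmetric, OF sums_single])
  finally show "Us (dl n) j = u j n" .
qed

lemma col_orth:
  "(\<lambda>j. complex_of_real (w j) * u j n * cnj (u j n')) sums (if n = n' then complex_of_real (w n) else 0)"
proof -
  have col_tc: "(\<lambda>j. u j n) = taylor_coeff (U (\<lambda>z. z ^ n))"
    using Us_tc[OF zpow_holo, of n] unfolding dl_tc[symmetric] Us_dl .
  have h: "U (\<lambda>z. z ^ n) holomorphic_on ball 0 1" by (rule U_holo[OF zpow_holo])
  have s: "summable (\<lambda>j. u n' j * u j n)"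
    using U_coeff(1)[OF h, of n'] unfolding col_tc[symmetric] .
  have v: "(\<Sum>j. u n' j * u j n) = dl n n'"
  proof -
    have "(\<Sum>j. u n' j * u j n) = Us (\<lambda>j. u j n) n'" by (simp add: Us_def)
    also have "\<dots> = Us (Us (dl n)) n'" by (simp only: Us_dl)
    also have "\<dots> = dl n n'" using Us_Us[OF L2_dl] by simp
    finally show ?thesis .
  qed
  have eq: "complex_of_real (w j) * u j n * cnj (u j n') = complex_of_real (w n') * (u n' j * u j n)" for j
  proof -
    have "complex_of_real (w j) * cnj (u j n') = cnj (complex_of_real (w j) * u j n')" by simp
    also have "\<dots> = cnj (complex_of_real (w n') * cnj (u n' j))" by (simp only: hermitian)
    also have "\<dots> = complex_of_real (w n') * u n' j" by simp
    finally show ?thesis by (simp add: mult_ac)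
  qed
  have "(\<lambda>j. complex_of_real (w n') * (u n' j * u j n)) sums (complex_of_real (w n') * dl n n')"
    using sums_mult[OF summable_sums[OF s], of "complex_of_real (w n')"] unfolding v .
  moreover have "complex_of_real (w n') * dl n n' = (if n = n' then complex_of_real (w n) else 0)"
    unfolding dl_def by auto
  ultimately show ?thesis unfolding eq by simp
qed

lemma Us_tr: "Us (tr N x) j = (\<Sum>n<N. u j n * x n)"
  unfolding Us_def tr_def
  by (subst suminf_finite[of "{..<N}"]) auto

lemma fin_iso:
  "(\<lambda>j. w j * (cmod (Us (tr N x) j))^2) sums (\<Sum>n<N. w n * (cmod (x n))^2)"
proof -
  define s where "s j = (\<Sum>n<N. u j n * x n)" for j
  have e: "complex_of_real (w j) * s j * cnj (s j) =
          (\<Sum>n<N. \<Sum>n'<N. x n * cnj (x n') * (complex_of_real (w j) * u j n * cnj (u j n')))" for j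
  proof -
    have c: "cnj (s j) = (\<Sum>n'<N. cnj (u j n') * cnj (x n'))" unfolding s_def by (simp add: cnj_sum)
    have "complex_of_real (w j) * s j * cnj (s j) =
       complex_of_real (w j) * ((\<Sum>n<N. u j n * x n) * (\<Sum>n'<N. cnj (u j n') * cnj (x n')))"
      unfolding c by (simp only: s_def mult.assoc)
    also have "\<dots> = complex_of_real (w j) * (\<Sum>n<N. \<Sum>n'<N. (u j n * x n) * (cnj (u j n') * cnj (x n')))"
      by (simp only: sum_product)
    also have "\<dots> = (\<Sum>n<N. \<Sum>n'<N. complex_of_real (w j) * ((u j n * x n) * (cnj (u j n') * cnj (x n'))))"
      by (simp only: sum_distrib_left)
    also have "\<dots> = (\<Sum>n<N. \<Sum>n'<N. x n * cnj (x n') * (complex_of_real (w j) * u j n * cnj (u j n')))"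
      by (intro sum.cong refl) (simp only: mult_ac)
    finally show ?thesis .
  qed
  have cs: "(\<lambda>j. complex_of_real (w j) * s j * cnj (s j)) sums
        (\<Sum>n<N. \<Sum>n'<N. x n * cnj (x n') * (if n = n' then complex_of_real (w n) else 0))"
    unfolding e by (intro sums_sum sums_mult col_orth)
  have "(\<Sum>n<N. \<Sum>n'<N. x n * cnj (x n') * (if n = n' then complex_of_real (w n) else 0))
        = (\<Sum>n<N. x n * cnj (x n) * complex_of_real (w n))"
  proof (rule sum.cong[OF refl])
    fix n assume n: "n \<in> {..<N}"
    have "(\<Sum>n'<N. x n * cnj (x n') * (if n = n' then complex_of_real (w n) else 0))
         = (\<Sum>n'\<in>{..<N}. if n' = n then x n * cnj (x n) * complex_of_real (w n) else 0)"
      by (intro sum.cong refl) auto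
    also have "\<dots> = x n * cnj (x n) * complex_of_real (w n)" using n by (simp only: sum.delta finite_lessThan if_True)
    finally show "(\<Sum>n'<N. x n * cnj (x n') * (if n = n' then complex_of_real (w n) else 0))
         = x n * cnj (x n) * complex_of_real (w n)" .
  qed
  also have "\<dots> = complex_of_real (\<Sum>n<N. w n * (cmod (x n))^2)"
    unfolding of_real_sum
  proof (rule sum.cong[OF refl])
    fix n
    show "x n * cnj (x n) * complex_of_real (w n) = complex_of_real (w n * (cmod (x n))^2)"
      by (simp only: complex_norm_square[symmetric] of_real_mult mult.commute)
  qed
  finally have cs2: "(\<lambda>j. complex_of_real (w j) * s j * cnj (s j)) sums complex_of_real (\<Sum>n<N. w n * (cmod (x n))^2)"
    using cs by simp
  have "(\<lambda>j. Re (complex_of_real (w j) * s j * cnj (s j))) sums Re (complex_of_real (\<Sum>n<N. w n * (cmod (x n))^2))"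
    by (rule sums_Re[OF cs2])
  moreover have "Re (complex_of_real (w j) * s j * cnj (s j)) = w j * (cmod (s j))^2" for j
  proof -
    have "complex_of_real (w j) * s j * cnj (s j) = complex_of_real (w j) * (s j * cnj (s j))"
      by (rule mult.assoc)
    also have "s j * cnj (s j) = complex_of_real ((cmod (s j))^2)" by (rule complex_norm_square[symmetric])
    also have "complex_of_real (w j) * complex_of_real ((cmod (s j))^2) = complex_of_real (w j * (cmod (s j))^2)"
      by (rule of_real_mult[symmetric])
    finally show ?thesis by (simp only: Re_complex_of_real)
  qed
  ultimately have "(\<lambda>j. w j * (cmod (s j))^2) sums (\<Sum>n<N. w n * (cmod (x n))^2)" by simp
  moreover have "Us (tr N x) j = s j" for j unfolding Us_tr s_def ..
  ultimately show ?thesis by simp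
qed

lemma nrm_tr_le: assumes "L2 x" shows "(\<Sum>n<N. w n * (cmod (x n))^2) \<le> nrm x"
  unfolding nrm_def using assms unfolding L2_def
  by (intro sum_le_suminf) (auto intro!: mult_nonneg_nonneg less_imp_le[OF w_pos])

lemma Us_L2_le: assumes "L2 x" shows "L2 (Us x)" and "nrm (Us x) \<le> nrm x"
proof -
  have bound: "(\<Sum>j<K. w j * (cmod (Us x j))^2) \<le> nrm x" for K
  proof -
    have lim: "(\<lambda>N. \<Sum>j<K. w j * (cmod (Us (tr N x) j))^2) \<longlonglongrightarrow> (\<Sum>j<K. w j * (cmod (Us x j))^2)"
    proof (intro tendsto_sum tendsto_mult tendsto_const tendsto_power tendsto_norm)
      fix j
      have "(\<lambda>N. \<Sum>n<N. u j n * x n) \<longlonglongrightarrow> (\<Sum>n. u j n * x n)"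
        by (rule summable_LIMSEQ[OF Us_summable[OF assms]])
      then show "(\<lambda>N. Us (tr N x) j) \<longlonglongrightarrow> Us x j" unfolding Us_tr by (simp add: Us_def)
    qed
    have le: "(\<Sum>j<K. w j * (cmod (Us (tr N x) j))^2) \<le> nrm x" for N
    proof -
      have "(\<Sum>j<K. w j * (cmod (Us (tr N x) j))^2) \<le> (\<Sum>j. w j * (cmod (Us (tr N x) j))^2)"
        using fin_iso[of N x] by (intro sum_le_suminf) (auto simp: sums_iff intro!: mult_nonneg_nonneg less_imp_le[OF w_pos])
      also have "\<dots> = (\<Sum>n<N. w n * (cmod (x n))^2)" using fin_iso[of N x] by (simp add: sums_iff)
      also have "\<dots> \<le> nrm x" by (rule nrm_tr_le[OF assms])
      finally show ?thesis .
    qed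
    show ?thesis by (rule LIMSEQ_le_const2[OF lim]) (use le in auto)
  qed
  show "L2 (Us x)" unfolding L2_def
    by (rule summableI_nonneg_bounded[OF _ bound]) (auto intro!: mult_nonneg_nonneg less_imp_le[OF w_pos])
  then show "nrm (Us x) \<le> nrm x" unfolding nrm_def[of "Us x"] L2_def
    by (intro suminf_le_const bound)
qed

lemma Us_iso: assumes "L2 x" shows "nrm (Us x) = nrm x"
proof -
  have "nrm x = nrm (Us (Us x))" using Us_Us[OF assms] by simp
  also have "\<dots> \<le> nrm (Us x)" by (rule Us_L2_le(2)[OF Us_L2_le(1)[OF assms]])
  finally show ?thesis using Us_L2_le(2)[OF assms] by simp
qed

lemma Us_add: assumes "L2 x" "L2 y" shows "Us (\<lambda>n. x n + y n) = (\<lambda>j. Us x j + Us y j)"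
proof
  fix j
  show "Us (\<lambda>n. x n + y n) j = Us x j + Us y j"
    unfolding Us_def using suminf_add[OF Us_summable[OF assms(1)] Us_summable[OF assms(2)], of j]
    by (simp add: distrib_left)
qed

lemma Us_cmult: assumes "L2 x" shows "Us (\<lambda>n. c * x n) = (\<lambda>j. c * Us x j)"
proof
  fix j
  show "Us (\<lambda>n. c * x n) j = c * Us x j"
    unfolding Us_def using suminf_mult[OF Us_summable[OF assms], of c j]
    by (simp add: mult_ac)
qed

lemma Us_ip: assumes "L2 x" "L2 y" shows "ip (Us x) (Us y) = ip x y"
proof -
  have Lx: "L2 (Us x)" and Ly: "L2 (Us y)" using Us_L2_le assms by auto
  have p: "Us (\<lambda>n. x n + c * y n) = (\<lambda>j. Us x j + c * Us y j)" for c
    using Us_add[OF assms(1) L2_cmult[OF assms(2)]] Us_cmult[OF assms(2)] by simp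
  have n: "nrm (\<lambda>j. Us x j + c * Us y j) = nrm (\<lambda>n. x n + c * y n)" for c
    using Us_iso[OF L2_add[OF assms(1) L2_cmult[OF assms(2)]]] unfolding p .
  have n1: "nrm (\<lambda>j. Us x j + Us y j) = nrm (\<lambda>n. x n + y n)" using n[of 1] by simp
  have n2: "nrm (\<lambda>j. Us x j - Us y j) = nrm (\<lambda>n. x n - y n)" using n[of "-1"] by simp
  have n3: "nrm (\<lambda>j. Us x j + \<i> * Us y j) = nrm (\<lambda>n. x n + \<i> * y n)" using n[of "\<i>"] by simp
  have n4: "nrm (\<lambda>j. Us x j - \<i> * Us y j) = nrm (\<lambda>n. x n - \<i> * y n)" using n[of "-\<i>"] by simp
  show ?thesis
    unfolding polarization[OF Lx Ly] polarization[OF assms] n1 n2 n3 n4 ..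
qed

lemma Us_selfadj: assumes "L2 x" "L2 y" shows "ip (Us x) y = ip x (Us y)"
proof -
  have Ly: "L2 (Us y)" using Us_L2_le assms by auto
  have "ip (Us x) y = ip (Us x) (Us (Us y))" using Us_Us[OF assms(2)] by simp
  also have "\<dots> = ip x (Us y)" by (rule Us_ip[OF assms(1) Ly])
  finally show ?thesis .
qed

end


context bw
begin

definition sh :: "nat \<Rightarrow> (nat \<Rightarrow> complex) \<Rightarrow> nat \<Rightarrow> complex" where
  "sh k x = (\<lambda>i. if k \<le> i then x (i - k) else 0)"
definition sb :: "nat \<Rightarrow> (nat \<Rightarrow> complex) \<Rightarrow> nat \<Rightarrow> complex" where
  "sb k y = (\<lambda>m. complex_of_real (w (m + k) / w m) * y (m + k))"

lemma shift_sums: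
  fixes f :: "nat \<Rightarrow> 'a::real_normed_vector"
  assumes "f sums s" shows "(\<lambda>i. if k \<le> i then f (i - k) else 0) sums s"
proof -
  let ?g = "\<lambda>i. if k \<le> i then f (i - k) else (0::'a)"
  have "(\<lambda>i. ?g (i + k)) sums s" using assms by simp
  then show ?thesis by (subst (asm) sums_zero_iff_shift) auto
qed

lemma L2_sh: assumes "L2 x" shows "L2 (sh k x)"
proof -
  have s: "summable (\<lambda>i. if k \<le> i then w (i - k) * (cmod (x (i - k)))^2 else 0)"
    using shift_sums[OF summable_sums[OF assms[unfolded L2_def]], of k] by (auto simp: sums_iff)
  show ?thesis unfolding L2_def
  proof (rule summable_le_real[OF _ _ s])
    fix i
    show "0 \<le> w i * (cmod (sh k x i))^2" using w_pos[of i] by simp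
    show "w i * (cmod (sh k x i))^2 \<le> (if k \<le> i then w (i - k) * (cmod (x (i - k)))^2 else 0)"
    proof (cases "k \<le> i")
      case True
      then have "w i \<le> w (i - k)" by (intro w_mono) simp
      then show ?thesis using True unfolding sh_def by (simp add: mult_right_mono)
    next
      case False then show ?thesis unfolding sh_def by simp
    qed
  qed
qed

lemma wratio: "w (m + k) / w m \<le> 1" "0 < w (m + k) / w m"
  using w_mono[of m "m + k"] w_pos[of m] w_pos[of "m+k"] by (auto simp: divide_le_eq_1)

lemma L2_sb: assumes "L2 y" shows "L2 (sb k y)"
proof -
  have s: "summable (\<lambda>m. w (m + k) * (cmod (y (m + k)))^2)"
    using assms unfolding L2_def by (subst summable_iff_shift) 
  show ?thesis unfolding L2_def
  proof (rule summable_le_real[OF _ _ s])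
    fix m
    show "0 \<le> w m * (cmod (sb k y m))^2" using w_pos[of m] by simp
    define r where "r = w (m + k) / w m"
    have r: "0 < r" "r \<le> 1" using wratio[of m k] by (auto simp: r_def)
    have wr: "w (m + k) = w m * r" using w_pos[of m] by (simp add: r_def)
    have "w m * (cmod (sb k y m))^2 = w m * (r * r) * (cmod (y (m + k)))^2"
      unfolding sb_def r_def[symmetric] using r by (simp add: norm_mult power2_eq_square)
    also have "\<dots> \<le> w m * r * (cmod (y (m + k)))^2"
    proof -
      have "w m * (r * r) \<le> w m * r" using r w_pos[of m] by (intro mult_left_mono) (auto simp: mult_le_cancel_left1)
      then show ?thesis by (intro mult_right_mono) auto
    qed
    also have "\<dots> = w (m + k) * (cmod (y (m + k)))^2" unfolding wr ..
    finally show "w m * (cmod (sb k y m))^2 \<le> w (m + k) * (cmod (y (m + k)))^2" .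
  qed
qed

lemma ip_sh: assumes "L2 x" "L2 y" shows "ip (sh k x) y = ip x (sb k y)"
proof -
  have s1: "(\<lambda>i. complex_of_real (w i) * sh k x i * cnj (y i)) sums ip (sh k x) y"
    by (rule ip_sums[OF L2_sh[OF assms(1)] assms(2)])
  have s2: "(\<lambda>m. complex_of_real (w m) * x m * cnj (sb k y m)) sums ip x (sb k y)"
    by (rule ip_sums[OF assms(1) L2_sb[OF assms(2)]])
  have e: "(\<lambda>i. complex_of_real (w i) * sh k x i * cnj (y i)) =
           (\<lambda>i. if k \<le> i then complex_of_real (w m) * x m * cnj (sb k y m) else 0)" if "False" for m
    using that by simp
  have "(\<lambda>i. if k \<le> i then (\<lambda>m. complex_of_real (w m) * x m * cnj (sb k y m)) (i - k) else 0) sums ip x (sb k y)"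
    by (rule shift_sums[OF s2])
  moreover have "(\<lambda>i. if k \<le> i then (\<lambda>m. complex_of_real (w m) * x m * cnj (sb k y m)) (i - k) else 0) =
                 (\<lambda>i. complex_of_real (w i) * sh k x i * cnj (y i))"
  proof
    fix i show "(if k \<le> i then (\<lambda>m. complex_of_real (w m) * x m * cnj (sb k y m)) (i - k) else 0) =
                 complex_of_real (w i) * sh k x i * cnj (y i)"
    proof (cases "k \<le> i")
      case True
      have wp: "w (i - k) \<noteq> 0" using w_pos[of "i - k"] by simp
      have "complex_of_real (w (i - k)) * cnj (sb k y (i - k)) = complex_of_real (w i) * cnj (y i)"
        unfolding sb_def using True wp by (simp add: field_simps)
      then show ?thesis using True unfolding sh_def by (simp add: mult_ac)
    next
      case False then show ?thesis unfolding sh_def by simp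
    qed
  qed
  ultimately have "(\<lambda>i. complex_of_real (w i) * sh k x i * cnj (y i)) sums ip x (sb k y)" by simp
  then show ?thesis using s1 sums_unique2 by blast
qed

end

context mob
begin

definition Qs :: "(nat \<Rightarrow> complex) \<Rightarrow> nat \<Rightarrow> complex" where
  "Qs x = (\<lambda>i. \<Sum>k=0..i. qc k * x (i - k))"
definition Ts :: "(nat \<Rightarrow> complex) \<Rightarrow> nat \<Rightarrow> complex" where
  "Ts y = (\<lambda>m. \<Sum>k\<le>gam. cnj (qc k) * sb k y m)"

lemma Qs_alt: "Qs x i = (\<Sum>k\<le>gam. qc k * sh k x i)"
proof -
  have "Qs x i = (\<Sum>k\<in>{..i+gam}. if k \<le> i then qc k * x (i - k) else 0)"
    unfolding Qs_def
  proof (rule sum.mono_neutral_cong_left)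
    show "finite {..i+gam}" by simp
    show "{0..i} \<subseteq> {..i+gam}" by auto
    show "\<forall>k\<in>{..i+gam} - {0..i}. (if k \<le> i then qc k * x (i - k) else 0) = 0" by auto
    show "\<And>k. k \<in> {0..i} \<Longrightarrow> qc k * x (i - k) = (if k \<le> i then qc k * x (i - k) else 0)" by auto
  qed
  also have "\<dots> = (\<Sum>k\<in>{..i+gam}. if k \<le> gam then qc k * sh k x i else 0)"
  proof (intro sum.cong refl)
    fix k
    show "(if k \<le> i then qc k * x (i - k) else 0) = (if k \<le> gam then qc k * sh k x i else 0)"
    proof (cases "k \<le> gam")
      case True then show ?thesis by (simp add: sh_def)
    next
      case False
      then have "qc k = 0" by (intro qc_zero) simp
      then show ?thesis by simp
    qed
  qed
  also have "\<dots> = (\<Sum>k\<le>gam. qc k * sh k x i)"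
  proof (rule sum.mono_neutral_cong_right)
    show "finite {..i+gam}" by simp
    show "{..gam} \<subseteq> {..i+gam}" by auto
    show "\<forall>k\<in>{..i+gam} - {..gam}. (if k \<le> gam then qc k * sh k x i else 0) = 0" by auto
    show "\<And>k. k \<in> {..gam} \<Longrightarrow> (if k \<le> gam then qc k * sh k x i else 0) = qc k * sh k x i" by auto
  qed
  finally show ?thesis .
qed

lemma L2_Qs: assumes "L2 x" shows "L2 (Qs x)"
  unfolding Qs_alt[abs_def] by (intro L2_sum L2_cmult L2_sh assms)

lemma L2_Ts: assumes "L2 y" shows "L2 (Ts y)"
  unfolding Ts_def by (intro L2_sum L2_cmult L2_sb assms)

lemma QT_adj: assumes "L2 x" "L2 y" shows "ip (Qs x) y = ip x (Ts y)"
proof -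
  have "ip (Qs x) y = ip (\<lambda>i. \<Sum>k\<le>gam. qc k * sh k x i) y" unfolding Qs_alt ..
  also have "\<dots> = (\<Sum>k\<le>gam. ip (\<lambda>i. qc k * sh k x i) y)"
    by (rule ip_sum_left) (use assms in \<open>auto intro: L2_cmult L2_sh\<close>)
  also have "\<dots> = (\<Sum>k\<le>gam. qc k * ip x (sb k y))"
    by (intro sum.cong refl) (simp add: ip_cmult_left L2_sh assms ip_sh)
  also have "\<dots> = (\<Sum>k\<le>gam. cnj (ip (\<lambda>m. cnj (qc k) * sb k y m) x))"
  proof (intro sum.cong refl)
    fix k
    have "ip (\<lambda>m. cnj (qc k) * sb k y m) x = cnj (qc k) * ip (sb k y) x"
      by (rule ip_cmult_left[OF L2_sb[OF assms(2)] assms(1)])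
    also have "ip (sb k y) x = cnj (ip x (sb k y))" by (rule ip_conj[OF assms(1) L2_sb[OF assms(2)]])
    finally show "qc k * ip x (sb k y) = cnj (ip (\<lambda>m. cnj (qc k) * sb k y m) x)" by simp
  qed
  also have "\<dots> = cnj (ip (Ts y) x)"
  proof -
    have "ip (Ts y) x = (\<Sum>k\<le>gam. ip (\<lambda>m. cnj (qc k) * sb k y m) x)"
      unfolding Ts_def by (rule ip_sum_left) (use assms in \<open>auto intro: L2_cmult L2_sb\<close>)
    then show ?thesis by simp
  qed
  also have "\<dots> = ip x (Ts y)" using ip_conj[OF assms(1) L2_Ts[OF assms(2)]] by simp
  finally show ?thesis .
qed

lemma Ts_support:
  assumes "Ts y m \<noteq> 0" shows "\<exists>k\<le>gam. y (m + k) \<noteq> 0"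
proof (rule ccontr)
  assume "\<not> (\<exists>k\<le>gam. y (m + k) \<noteq> 0)"
  then have "Ts y m = 0" unfolding Ts_def sb_def by (intro sum.neutral) auto
  with assms show False by simp
qed

end

lemma resid:
  fixes N b k i i' :: nat
  assumes "N \<ge> 2 * (3 + b)" "i \<le> b + 2" "i' \<le> b + 2" "N dvd (k + i)"
  shows "(k + i') mod N \<noteq> 3 + b"
proof -
  obtain p where p: "k + i = N * p" using assms(4) by blast
  show ?thesis
  proof (cases "i \<le> i'")
    case True
    have "k + i' = N * p + (i' - i)" using p True by simp
    then have "(k + i') mod N = (i' - i) mod N" by simp
    also have "\<dots> = i' - i" using assms True by (intro mod_less) simp
    finally show ?thesis using assms(3) by simp
  next
    case False
    have "p \<ge> 1"
    proof (rule ccontr)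
      assume "\<not> p \<ge> 1" then have "p = 0" by simp
      then show False using p False by simp
    qed
    then have "k + i' = N * (p - 1) + (N - (i - i'))" using p False assms(1,2)
      by (simp add: algebra_simps)
    then have "(k + i') mod N = (N - (i - i')) mod N" by simp
    also have "\<dots> = N - (i - i')" using False assms by (intro mod_less) simp
    finally show ?thesis using assms False by simp
  qed
qed


context mob
begin

lemma C_tc: assumes "f holomorphic_on ball 0 1"
  shows "taylor_coeff (\<lambda>z. f (phi z)) = Qs (Us (taylor_coeff f))"
proof
  fix i
  show "taylor_coeff (\<lambda>z. f (phi z)) i = Qs (Us (taylor_coeff f)) i"
    unfolding C_coeff[OF assms] Us_tc[OF assms] Qs_def ..
qed

definition Phi :: "nat \<Rightarrow> nat \<Rightarrow> complex" where "Phi j = taylor_coeff (\<lambda>z. phi z ^ j)"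

lemma phi_pow_holo: "(\<lambda>z. phi z ^ j) holomorphic_on ball 0 1"
  using holomorphic_on_subset[OF phi_holo ball1_sub] by (intro holomorphic_intros)

lemma Phi_eq: "Phi j = Qs (Us (dl j))"
  unfolding Phi_def dl_tc using C_tc[OF zpow_holo, of j] by simp

lemma L2_Us: "L2 x \<Longrightarrow> L2 (Us x)" using Us_L2_le(1) .

lemma L2_Phi: "L2 (Phi j)"
  unfolding Phi_eq by (intro L2_Qs L2_Us L2_dl)

lemma CPhi: "Qs (Us (Phi j)) = dl j"
proof -
  have "Qs (Us (Phi j)) = taylor_coeff (\<lambda>z. phi (phi z) ^ j)"
    unfolding Phi_def using C_tc[OF phi_pow_holo, of j] by simp
  also have "\<dots> = taylor_coeff (\<lambda>z. z ^ j)"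
  proof (rule ext, rule tc_cong[of 1])
    fix z :: complex assume "z \<in> ball 0 1"
    then have "1 - cnj a * z \<noteq> 0" using ball1_sub den_nz_ball by blast
    then show "phi (phi z) ^ j = z ^ j" by (simp add: phi_phi)
  qed simp
  finally show ?thesis unfolding dl_tc .
qed

lemma key_E: assumes "L2 G"
  shows "ip (Phi j) G = complex_of_real (w j) * cnj (Us (Ts G) j)"
proof -
  have "ip (Phi j) G = ip (Us (dl j)) (Ts G)"
    unfolding Phi_eq by (rule QT_adj[OF L2_Us[OF L2_dl] assms])
  also have "\<dots> = ip (dl j) (Us (Ts G))"
    by (rule Us_selfadj[OF L2_dl L2_Ts[OF assms]])
  also have "\<dots> = complex_of_real (w j) * cnj (Us (Ts G) j)"
    by (rule ip_dl_left[OF L2_Us[OF L2_Ts[OF assms]]])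
  finally show ?thesis .
qed

lemma recover: assumes "L2 G" shows "Us (Ts (Us (Ts G))) = G"
proof
  fix j
  define E where "E = Us (Ts G)"
  have LE: "L2 E" unfolding E_def by (intro L2_Us L2_Ts assms)
  have "complex_of_real (w j) * cnj (Us (Ts E) j) = ip (dl j) (Us (Ts E))"
    by (rule ip_dl_left[OF L2_Us[OF L2_Ts[OF LE]], symmetric])
  also have "\<dots> = ip (Us (dl j)) (Ts E)"
    by (rule Us_selfadj[OF L2_dl L2_Ts[OF LE], symmetric])
  also have "\<dots> = ip (Phi j) E"
    unfolding Phi_eq by (rule QT_adj[OF L2_Us[OF L2_dl] LE, symmetric])
  also have "\<dots> = ip (Us (Phi j)) (Ts G)"
    unfolding E_def by (rule Us_selfadj[OF L2_Phi L2_Ts[OF assms], symmetric])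
  also have "\<dots> = ip (Qs (Us (Phi j))) G"
    by (rule QT_adj[OF L2_Us[OF L2_Phi] assms, symmetric])
  also have "\<dots> = complex_of_real (w j) * cnj (G j)"
    unfolding CPhi by (rule ip_dl_left[OF assms])
  finally have "complex_of_real (w j) * cnj (Us (Ts E) j) = complex_of_real (w j) * cnj (G j)" .
  then have "cnj (Us (Ts E) j) = cnj (G j)" using w_pos[of j] by simp
  then show "Us (Ts (Us (Ts G))) j = G j" unfolding E_def by simp
qed

lemma final_orth:
  fixes N :: nat
  assumes LG: "L2 G" and LH: "L2 H" and N: "N \<ge> 2 * (3 + b)"
    and E0: "\<And>j. Us (Ts G) j \<noteq> 0 \<Longrightarrow> N dvd j"
    and E1: "\<And>j. Us (Ts H) j \<noteq> 0 \<Longrightarrow> j mod N = 3 + b"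
  shows "ip G H = 0"
proof -
  define E0' where "E0' = Us (Ts G)"
  define E1' where "E1' = Us (Ts H)"
  have L0: "L2 E0'" unfolding E0'_def by (intro L2_Us L2_Ts LG)
  have L1: "L2 E1'" unfolding E1'_def by (intro L2_Us L2_Ts LH)
  have "ip G H = ip (Us (Ts E0')) (Us (Ts E1'))"
    unfolding E0'_def E1'_def recover[OF LG] recover[OF LH] ..
  also have "\<dots> = ip (Ts E0') (Ts E1')" by (rule Us_ip[OF L2_Ts[OF L0] L2_Ts[OF L1]])
  also have "\<dots> = (\<Sum>k. 0)" unfolding ip_def
  proof (rule suminf_cong)
    fix k
    show "complex_of_real (w k) * Ts E0' k * cnj (Ts E1' k) = 0"
    proof (rule ccontr)
      assume "complex_of_real (w k) * Ts E0' k * cnj (Ts E1' k) \<noteq> 0"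
      then have t0: "Ts E0' k \<noteq> 0" and t1: "Ts E1' k \<noteq> 0" by auto
      obtain i where i: "i \<le> gam" "E0' (k + i) \<noteq> 0" using Ts_support[OF t0] by blast
      obtain i' where i': "i' \<le> gam" "E1' (k + i') \<noteq> 0" using Ts_support[OF t1] by blast
      have "N dvd (k + i)" using E0 i(2) unfolding E0'_def by blast
      moreover have "(k + i') mod N = 3 + b" using E1 i'(2) unfolding E1'_def by blast
      ultimately show False using resid[OF N, of i i' k] i(1) i'(1) unfolding gam_def by simp
    qed
  qed
  also have "\<dots> = 0" by simp
  finally show ?thesis .
qed

end

lemma pow_mod_N: fixes l :: complex assumes "l ^ N = 1" shows "l ^ j = l ^ (j mod N)"
proof -
  have "l ^ j = l ^ (N * (j div N) + j mod N)" by simp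
  also have "\<dots> = (l ^ N) ^ (j div N) * l ^ (j mod N)" by (simp only: power_add power_mult)
  finally show ?thesis using assms by simp
qed

lemma l_ne1:
  fixes l :: complex
  assumes "N > 0" "l ^ N = 1" "\<And>k. 0 < k \<Longrightarrow> k < N \<Longrightarrow> l ^ k \<noteq> 1" "\<not> N dvd j"
  shows "l ^ j \<noteq> 1"
proof -
  have "j mod N \<noteq> 0" using assms(4) by (simp add: dvd_eq_mod_eq_0)
  moreover have "j mod N < N" using assms(1) by simp
  ultimately have "l ^ (j mod N) \<noteq> 1" using assms(3) by simp
  then show ?thesis using pow_mod_N[OF assms(2)] by simp
qed

lemma l_ne_m:
  fixes l :: complex
  assumes "N > 0" "l ^ N = 1" "\<And>k. 0 < k \<Longrightarrow> k < N \<Longrightarrow> l ^ k \<noteq> 1" "m < N" "j mod N \<noteq> m" "l \<noteq> 0"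
  shows "l ^ j \<noteq> l ^ m"
proof
  assume eq: "l ^ j = l ^ m"
  define r where "r = j mod N"
  have r: "r < N" "r \<noteq> m" using assms(1,5) by (auto simp: r_def)
  have lr: "l ^ r = l ^ m" using eq pow_mod_N[OF assms(2), of j] by (simp add: r_def)
  show False
  proof (cases "r < m")
    case True
    have "l ^ m = l ^ r * l ^ (m - r)" using True by (simp add: power_add[symmetric])
    then have "l ^ (m - r) = 1" using lr assms(6) by simp
    then show False using assms(3)[of "m - r"] True assms(4) by simp
  next
    case False
    then have rm: "m < r" using r by simp
    have "l ^ r = l ^ m * l ^ (r - m)" using rm by (simp add: power_add[symmetric])
    then have "l ^ (r - m) = 1" using lr assms(6) by simp
    then show False using assms(3)[of "r - m"] rm r by simp
  qed
qed

theorem lemma5p6: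
  fixes \<beta> N :: nat and \<alpha> l :: complex
  assumes "\<alpha> \<in> ball 0 1" and "\<alpha> \<noteq> 0"
    and "cmod l = 1"
    and "N > 0" and "l ^ N = 1" and "\<And>k. 0 < k \<Longrightarrow> k < N \<Longrightarrow> l ^ k \<noteq> 1"
    and "N \<ge> 2 * (3 + \<beta>)"
  shows "\<forall>g \<in> adj_eigenspace (real \<beta>) (\<lambda>z. mobius_phi \<alpha> (l * mobius_phi \<alpha> z)) (cnj l ^ 0).
         \<forall>h \<in> adj_eigenspace (real \<beta>) (\<lambda>z. mobius_phi \<alpha> (l * mobius_phi \<alpha> z)) (cnj l ^ (3 + \<beta>)).
           A2_inner (real \<beta>) g h = 0"
proof (intro ballI)
  fix g h
  assume g: "g \<in> adj_eigenspace (real \<beta>) (\<lambda>z. mobius_phi \<alpha> (l * mobius_phi \<alpha> z)) (cnj l ^ 0)"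
     and h: "h \<in> adj_eigenspace (real \<beta>) (\<lambda>z. mobius_phi \<alpha> (l * mobius_phi \<alpha> z)) (cnj l ^ (3 + \<beta>))"
  interpret M: mob \<beta> \<alpha>
    by unfold_locales (use assms(1,2) in auto)
  have l0: "l \<noteq> 0" using assms(3) by auto
  have A2_eq: "f \<in> A2 (real \<beta>) \<longleftrightarrow> f holomorphic_on ball 0 1 \<and> M.L2 (taylor_coeff f)" for f
    unfolding A2_def M.L2_def M.w_def by simp
  have inner_eq: "A2_inner (real \<beta>) f1 f2 = M.ip (taylor_coeff f1) (taylor_coeff f2)" for f1 f2
    unfolding A2_inner_def M.ip_def M.w_def ..
  have comp_eq: "taylor_coeff (comp_op (\<lambda>z. mobius_phi \<alpha> (l * mobius_phi \<alpha> z)) (\<lambda>z. M.phi z ^ j)) =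
        (\<lambda>n. l ^ j * M.Phi j n)" for j
  proof
    fix n
    have "taylor_coeff (comp_op (\<lambda>z. mobius_phi \<alpha> (l * mobius_phi \<alpha> z)) (\<lambda>z. M.phi z ^ j)) n =
          taylor_coeff (\<lambda>z. l ^ j * M.phi z ^ j) n"
    proof (rule tc_cong[of 1])
      fix z :: complex assume z: "z \<in> ball 0 1"
      have pz: "M.phi z \<in> ball 0 1" by (rule M.phi_ball[OF z])
      then have lz: "l * M.phi z \<in> ball 0 1" using assms(3) by (simp add: norm_mult)
      then have "1 - cnj \<alpha> * (l * M.phi z) \<noteq> 0" using M.ball1_sub M.den_nz_ball by blast
      then have "M.phi (M.phi (l * M.phi z)) = l * M.phi z" by (rule M.phi_phi)
      then show "comp_op (\<lambda>z. mobius_phi \<alpha> (l * mobius_phi \<alpha> z)) (\<lambda>z. M.phi z ^ j) z = l ^ j * M.phi z ^ j"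
        unfolding comp_op_def M.phi_def by (simp add: power_mult_distrib)
    qed simp
    also have "\<dots> = l ^ j * M.Phi j n"
      unfolding M.Phi_def by (rule tc_cmult[OF M.phi_pow_holo]) simp
    finally show "taylor_coeff (comp_op (\<lambda>z. mobius_phi \<alpha> (l * mobius_phi \<alpha> z)) (\<lambda>z. M.phi z ^ j)) n =
        l ^ j * M.Phi j n" .
  qed
  have Phi_A2: "(\<lambda>z. M.phi z ^ j) \<in> A2 (real \<beta>)" for j
    unfolding A2_eq using M.phi_pow_holo M.L2_Phi unfolding M.Phi_def by blast
  have eig: "l ^ j * M.ip (M.Phi j) (taylor_coeff f) = cnj \<mu> * M.ip (M.Phi j) (taylor_coeff f)"
    if f: "f \<in> adj_eigenspace (real \<beta>) (\<lambda>z. mobius_phi \<alpha> (l * mobius_phi \<alpha> z)) \<mu>" for f \<mu> j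
  proof -
    have fA: "f \<in> A2 (real \<beta>)" using f unfolding adj_eigenspace_def by blast
    then have fh: "f holomorphic_on ball 0 1" and fL: "M.L2 (taylor_coeff f)" unfolding A2_eq by auto
    have E: "A2_inner (real \<beta>) (comp_op (\<lambda>z. mobius_phi \<alpha> (l * mobius_phi \<alpha> z)) (\<lambda>z. M.phi z ^ j)) f =
             A2_inner (real \<beta>) (\<lambda>z. M.phi z ^ j) (\<lambda>z. \<mu> * f z)"
      using f Phi_A2[of j] unfolding adj_eigenspace_def by blast
    have tcm: "taylor_coeff (\<lambda>z. \<mu> * f z) = (\<lambda>n. \<mu> * taylor_coeff f n)"
      by (rule ext, rule tc_cmult[OF fh]) simp
    have A: "A2_inner (real \<beta>) (comp_op (\<lambda>z. mobius_phi \<alpha> (l * mobius_phi \<alpha> z)) (\<lambda>z. M.phi z ^ j)) f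
        = l ^ j * M.ip (M.Phi j) (taylor_coeff f)"
      unfolding inner_eq comp_eq by (rule M.ip_cmult_left[OF M.L2_Phi fL])
    have B: "A2_inner (real \<beta>) (\<lambda>z. M.phi z ^ j) (\<lambda>z. \<mu> * f z) = cnj \<mu> * M.ip (M.Phi j) (taylor_coeff f)"
      unfolding inner_eq tcm M.Phi_def[symmetric] by (rule M.ip_cmult_right[OF fL M.L2_Phi])
    have "l ^ j * M.ip (M.Phi j) (taylor_coeff f) =
          A2_inner (real \<beta>) (comp_op (\<lambda>z. mobius_phi \<alpha> (l * mobius_phi \<alpha> z)) (\<lambda>z. M.phi z ^ j)) f"
      by (rule A[symmetric])
    also have "\<dots> = A2_inner (real \<beta>) (\<lambda>z. M.phi z ^ j) (\<lambda>z. \<mu> * f z)" by (rule E)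
    also have "\<dots> = cnj \<mu> * M.ip (M.Phi j) (taylor_coeff f)" by (rule B)
    finally show ?thesis .
  qed
  have gA: "g \<in> A2 (real \<beta>)" using g unfolding adj_eigenspace_def by blast
  have hA: "h \<in> A2 (real \<beta>)" using h unfolding adj_eigenspace_def by blast
  have LG: "M.L2 (taylor_coeff g)" using gA unfolding A2_eq by auto
  have LH: "M.L2 (taylor_coeff h)" using hA unfolding A2_eq by auto
  have E0: "N dvd j" if "M.Us (M.Ts (taylor_coeff g)) j \<noteq> 0" for j
  proof (rule ccontr)
    assume nd: "\<not> N dvd j"
    have "l ^ j \<noteq> 1" by (rule l_ne1[OF assms(4,5,6) nd])
    moreover have "l ^ j * M.ip (M.Phi j) (taylor_coeff g) = 1 * M.ip (M.Phi j) (taylor_coeff g)"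
      using eig[OF g, of j] by simp
    ultimately have "M.ip (M.Phi j) (taylor_coeff g) = 0" by simp
    then have "complex_of_real (M.w j) * cnj (M.Us (M.Ts (taylor_coeff g)) j) = 0"
      unfolding M.key_E[OF LG] .
    then show False using that M.w_pos[of j] by simp
  qed
  have E1: "j mod N = 3 + \<beta>" if "M.Us (M.Ts (taylor_coeff h)) j \<noteq> 0" for j
  proof (rule ccontr)
    assume nd: "j mod N \<noteq> 3 + \<beta>"
    have "3 + \<beta> < N" using assms(7) by simp
    then have "l ^ j \<noteq> l ^ (3 + \<beta>)" using l_ne_m[of N l "3 + \<beta>" j] assms(4,5,6) nd l0 by blast
    moreover have "l ^ j * M.ip (M.Phi j) (taylor_coeff h) = l ^ (3 + \<beta>) * M.ip (M.Phi j) (taylor_coeff h)"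
      using eig[OF h, of j] by (simp add: power_mult_distrib)
    ultimately have "M.ip (M.Phi j) (taylor_coeff h) = 0" by simp
    then have "complex_of_real (M.w j) * cnj (M.Us (M.Ts (taylor_coeff h)) j) = 0"
      unfolding M.key_E[OF LH] .
    then show False using that M.w_pos[of j] by simp
  qed
  have "M.ip (taylor_coeff g) (taylor_coeff h) = 0"
    by (rule M.final_orth[OF LG LH assms(7) E0 E1])
  then show "A2_inner (real \<beta>) g h = 0" unfolding inner_eq .
qed


end
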